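(* For any $1\le q\le \mathsf n$, conditionally on $X_{q:\mathsf n}$, $(V_{\mathsf n},\dots,V_1)$ is a Markov chain. Its transition kernels $(K^{V|X}_{\pi_V,k,q})$ satisfy: for all $q\le k<\mathsf n$ there exists a measure $\mu_{k,q}$ such that for every measurable set $A$, \[K^{V|X}_{\pi_V,k,q}(V_{k+1},A)=\mathbb P_{\pi_V}(V_k\in A\mid V_{k+1:\mathsf n},X_{q:\mathsf n})=\mathbb P_{\pi_V}(V_k\in A\mid V_{k+1},X_{q:\mathsf n})\ge\nu_k\,\mu_{k,q}(A),\] while for all $1\le k<q$, \[K^{V|X}_{\pi_V,k,q}(V_{k+1},A)=\mathbb P_{\pi_V}(V_k\in A\mid V_{k+1:\mathsf n},X_{q:\mathsf n})=\pi_V(A).\]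
   Context: Let $\mathsf n\ge1$, $\pi_V$ a probability distribution on a measurable space $\mathbb V$, $\mathbb X$ a discrete set, and $K_i:\mathbb X\times\mathbb V^2\to[0,\infty)$ ($i\ge1$) such that each $K_i(\cdot,v,w)$ is a probability distribution on $\mathbb X$. $\mathbb P_{\pi_V}$ is the law on $\mathbb V^{\mathsf n+1}\times\mathbb X^{\mathsf n}$ given by $\mathbb P_{\pi_V}(V_{1:\mathsf n+1}\in A_{1:\mathsf n+1},X_{1:\mathsf n}=x_{1:\mathsf n})=\int\prod_{i=1}^{\mathsf n+1}\mathbf 1_{A_i}(v_i)\pi_V(dv_i)\prod_{i=1}^{\mathsf n}K_i(x_i,v_i,v_{i+1})$, i.e. $V_i$ i.i.d. $\pi_V$ and, given $V$, the $X_i$ independent with $\mathbb P(X_i=x\mid V)=K_i(x,V_i,V_{i+1})$. Assumption H2: there exist $\nu_i>0$ with $\nu_i\le K_i(x,v,w)\le1$ for all $x\in\mathbb X$, all $i$, all $v,w\in\mathbb V$. *)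

theory Defs
  imports "HOL-Probability.Probability"
begin

text \<open>Sample space: pairs (v, x) with v i = V_i (i = 1..n+1) and x i = X_i (i = 1..n).\<close>

definition joint_law ::
  "nat \<Rightarrow> 'v measure \<Rightarrow> (nat \<Rightarrow> 'x \<Rightarrow> 'v \<Rightarrow> 'v \<Rightarrow> real)
    \<Rightarrow> ((nat \<Rightarrow> 'v) \<times> (nat \<Rightarrow> 'x)) measure" where
  "joint_law n piV K =
     density (PiM {1..n+1} (\<lambda>_. piV) \<Otimes>\<^sub>M PiM {1..n} (\<lambda>_. count_space UNIV))
       (\<lambda>(v, x). ennreal (\<Prod>i=1..n. K i (x i) (v i) (v (Suc i))))"

definition Xobs :: "nat \<Rightarrow> nat \<Rightarrow> (nat \<Rightarrow> 'v) \<times> (nat \<Rightarrow> 'x) \<Rightarrow> (nat \<Rightarrow> 'x)" where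
  "Xobs q n \<omega> = restrict (snd \<omega>) {q..n}"

definition sig_Vtail_X ::
  "nat \<Rightarrow> 'v measure \<Rightarrow> ((nat \<Rightarrow> 'v) \<times> (nat \<Rightarrow> 'x)) measure \<Rightarrow> nat \<Rightarrow> nat
    \<Rightarrow> ((nat \<Rightarrow> 'v) \<times> (nat \<Rightarrow> 'x)) measure" where
  "sig_Vtail_X n piV M k q =
     vimage_algebra (space M) (\<lambda>\<omega>. (restrict (fst \<omega>) {Suc k..n}, Xobs q n \<omega>))
       (PiM {Suc k..n} (\<lambda>_. piV) \<Otimes>\<^sub>M PiM {q..n} (\<lambda>_. (count_space UNIV :: 'x measure)))"

definition sig_V1_X ::
  "nat \<Rightarrow> 'v measure \<Rightarrow> ((nat \<Rightarrow> 'v) \<times> (nat \<Rightarrow> 'x)) measure \<Rightarrow> nat \<Rightarrow> nat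
    \<Rightarrow> ((nat \<Rightarrow> 'v) \<times> (nat \<Rightarrow> 'x)) measure" where
  "sig_V1_X n piV M k q =
     vimage_algebra (space M) (\<lambda>\<omega>. (fst \<omega> (Suc k), Xobs q n \<omega>))
       (piV \<Otimes>\<^sub>M PiM {q..n} (\<lambda>_. (count_space UNIV :: 'x measure)))"

definition condP_V ::
  "((nat \<Rightarrow> 'v) \<times> (nat \<Rightarrow> 'x)) measure \<Rightarrow> ((nat \<Rightarrow> 'v) \<times> (nat \<Rightarrow> 'x)) measure
    \<Rightarrow> nat \<Rightarrow> 'v set \<Rightarrow> (nat \<Rightarrow> 'v) \<times> (nat \<Rightarrow> 'x) \<Rightarrow> real" where
  "condP_V M F k A = real_cond_exp M F (indicator {\<omega> \<in> space M. fst \<omega> k \<in> A})"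

end

theory Submission imports Defs begin

locale L4 =
  fixes n q :: nat and piV :: "'v measure"
    and K :: "nat \<Rightarrow> 'x::countable \<Rightarrow> 'v \<Rightarrow> 'v \<Rightarrow> real" and \<nu> :: "nat \<Rightarrow> real"
  assumes n: "1 \<le> n"
    and piV: "prob_space piV"
    and K_meas: "\<forall>i\<ge>1. \<forall>x. (\<lambda>(v, w). K i x v w) \<in> borel_measurable (piV \<Otimes>\<^sub>M piV)"
    and K_distr: "\<forall>i\<ge>1. \<forall>v\<in>space piV. \<forall>w\<in>space piV. ((\<lambda>x. K i x v w) has_sum 1) UNIV"
    and H2_pos: "\<forall>i\<ge>1. 0 < \<nu> i"
    and H2: "\<forall>i\<ge>1. \<forall>x. \<forall>v\<in>space piV. \<forall>w\<in>space piV. \<nu> i \<le> K i x v w \<and> K i x v w \<le> 1"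
    and q1: "1 \<le> q" and qn: "q \<le> n"
begin

interpretation P: prob_space piV by (rule piV)

lemma psf_V: "product_sigma_finite (\<lambda>_::nat. piV)"
  by (simp add: product_sigma_finite_def P.sigma_finite_measure_axioms)

lemma psf_X: "product_sigma_finite (\<lambda>_::nat. count_space (UNIV::'x set))"
  by (simp add: product_sigma_finite_def sigma_finite_measure_count_space)

lemma Xs_eq: "finite I \<Longrightarrow> PiM I (\<lambda>_. count_space (UNIV::'x set)) = count_space (PiE I (\<lambda>_. UNIV))"
  by (rule count_space_PiM_finite) auto

lemma Xs_meas: "finite I \<Longrightarrow> f \<in> borel_measurable (PiM I (\<lambda>_. count_space (UNIV::'x set)))"
  by (simp add: Xs_eq)

lemma Kfac_meas:
  assumes "1 \<le> i" "a \<in> M \<rightarrow>\<^sub>M piV" "b \<in> M \<rightarrow>\<^sub>M piV"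
  shows "(\<lambda>z. K i c (a z) (b z)) \<in> borel_measurable M"
proof -
  have "(\<lambda>(v, w). K i c v w) \<in> borel_measurable (piV \<Otimes>\<^sub>M piV)" using K_meas assms(1) by auto
  from measurable_compose[OF measurable_Pair[OF assms(2,3)] this] show ?thesis by simp
qed

lemma Kfac_measE:
  assumes "1 \<le> i" "a \<in> M \<rightarrow>\<^sub>M piV" "b \<in> M \<rightarrow>\<^sub>M piV"
  shows "(\<lambda>z. ennreal (K i c (a z) (b z))) \<in> borel_measurable M"
  using measurable_compose[OF Kfac_meas[OF assms] measurable_ennreal] .

lemma K_nn: "1 \<le> i \<Longrightarrow> v \<in> space piV \<Longrightarrow> w \<in> space piV \<Longrightarrow> 0 \<le> K i x v w"
proof -
  assume a: "1 \<le> i" "v \<in> space piV" "w \<in> space piV"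
  have "0 < \<nu> i" using H2_pos a by auto
  moreover have "\<nu> i \<le> K i x v w" using H2 a by auto
  ultimately show ?thesis by linarith
qed

lemma K_sum1:
  assumes "1 \<le> i" "v \<in> space piV" "w \<in> space piV"
  shows "(\<integral>\<^sup>+x. ennreal (K i x v w) \<partial>count_space UNIV) = 1"
proof -
  have hs: "((\<lambda>x. K i x v w) has_sum 1) UNIV" using K_distr assms by auto
  have nn: "\<And>x. 0 \<le> K i x v w" using K_nn assms by blast
  have "(\<lambda>x. norm (K i x v w)) summable_on UNIV"
    using has_sum_imp_summable[OF hs] nn by (simp add: abs_of_nonneg)
  then have as: "Infinite_Set_Sum.abs_summable_on (\<lambda>x. K i x v w) UNIV" using abs_summable_equivalent by blast
  have "(\<integral>\<^sup>+x. ennreal (K i x v w) \<partial>count_space UNIV) = ennreal (infsetsum (\<lambda>x. K i x v w) UNIV)"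
    by (rule nn_integral_conv_infsetsum[OF as]) (use nn in auto)
  also have "infsetsum (\<lambda>x. K i x v w) UNIV = infsum (\<lambda>x. K i x v w) UNIV"
    by (rule infsetsum_infsum[OF as])
  also have "\<dots> = 1" using hs by (rule infsumI)
  finally show ?thesis by simp
qed



primrec beta :: "nat \<Rightarrow> (nat \<Rightarrow> 'x) \<Rightarrow> 'v \<Rightarrow> ennreal" where
  "beta 0 x v = 1"
| "beta (Suc k) x v = (if q \<le> k then \<integral>\<^sup>+u. ennreal (K k (x k) u v) * beta k x u \<partial>piV else 1)"

lemma beta_meas: "beta k x \<in> borel_measurable piV"
proof (induction k)
  case 0
  then show ?case by simp
next
  case (Suc k)
  show ?case
  proof (cases "q \<le> k")
    case True
    have k1: "1 \<le> k" using True q1 by simp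
    have "(\<lambda>z. ennreal (K k (x k) (snd z) (fst z))) \<in> borel_measurable (piV \<Otimes>\<^sub>M piV)"
      by (rule Kfac_measE[OF k1]) auto
    moreover have "(\<lambda>z. beta k x (snd z)) \<in> borel_measurable (piV \<Otimes>\<^sub>M piV)"
      using measurable_compose[OF measurable_snd[of piV piV] Suc.IH] by simp
    ultimately have "(\<lambda>z. ennreal (K k (x k) (snd z) (fst z)) * beta k x (snd z)) \<in> borel_measurable (piV \<Otimes>\<^sub>M piV)"
      by (rule borel_measurable_times_ennreal)
    then have "case_prod (\<lambda>v u. ennreal (K k (x k) u v) * beta k x u) \<in> borel_measurable (piV \<Otimes>\<^sub>M piV)"
      by (simp add: case_prod_beta')
    from P.borel_measurable_nn_integral[OF this] show ?thesis using True by simp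
  next
    case False
    then show ?thesis by simp
  qed
qed

definition cb :: "nat \<Rightarrow> real" where "cb k = (\<Prod>i\<in>{q..<k}. \<nu> i)"

lemma cb_pos: "0 < cb k"
  unfolding cb_def using H2_pos q1 by (intro prod_pos) auto

lemma beta_bounds: "v \<in> space piV \<Longrightarrow> ennreal (cb k) \<le> beta k x v \<and> beta k x v \<le> 1"
proof (induction k arbitrary: v)
  case 0
  then show ?case using q1 by (simp add: cb_def)
next
  case (Suc k)
  show ?case
  proof (cases "q \<le> k")
    case True
    have k1: "1 \<le> k" using True q1 by simp
    have up: "beta (Suc k) x v \<le> 1"
    proof -
      have "(\<integral>\<^sup>+u. ennreal (K k (x k) u v) * beta k x u \<partial>piV) \<le> (\<integral>\<^sup>+u. 1 \<partial>piV)"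
      proof (rule nn_integral_mono)
        fix u assume u: "u \<in> space piV"
        have "K k (x k) u v \<le> 1" using H2 k1 u Suc.prems by auto
        moreover have "beta k x u \<le> 1" using Suc.IH[OF u] by auto
        ultimately show "ennreal (K k (x k) u v) * beta k x u \<le> 1"
          using mult_mono[of "ennreal (K k (x k) u v)" 1 "beta k x u" 1] by simp
      qed
      then show ?thesis using True by (simp add: P.emeasure_space_1)
    qed
    have lo: "ennreal (cb (Suc k)) \<le> beta (Suc k) x v"
    proof -
      have "cb (Suc k) = \<nu> k * cb k" using True unfolding cb_def
        by (simp add: prod.atLeastLessThan_Suc mult.commute)
      have "(\<integral>\<^sup>+u. ennreal (\<nu> k * cb k) \<partial>piV) \<le> (\<integral>\<^sup>+u. ennreal (K k (x k) u v) * beta k x u \<partial>piV)"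
      proof (rule nn_integral_mono)
        fix u assume u: "u \<in> space piV"
        have "\<nu> k \<le> K k (x k) u v" using H2 k1 u Suc.prems by auto
        moreover have "ennreal (cb k) \<le> beta k x u" using Suc.IH[OF u] by auto
        moreover have "0 \<le> \<nu> k" using H2_pos k1 by (auto intro: less_imp_le)
        moreover have "0 \<le> cb k" using cb_pos by (auto intro: less_imp_le)
        ultimately show "ennreal (\<nu> k * cb k) \<le> ennreal (K k (x k) u v) * beta k x u"
          by (simp add: ennreal_mult mult_mono)
      qed
      then show ?thesis using True \<open>cb (Suc k) = \<nu> k * cb k\<close> by (simp add: P.emeasure_space_1)
    qed
    from up lo show ?thesis by simp
  next
    case False
    then have "cb (Suc k) = 1" unfolding cb_def by simp
    then show ?thesis using False by simp
  qed
qed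

definition hfun :: "nat \<Rightarrow> (nat \<Rightarrow> 'x) \<Rightarrow> 'v \<Rightarrow> 'v \<Rightarrow> ennreal" where
  "hfun k x w v = (if q \<le> k then ennreal (K k (x k) v w) else 1) * beta k x v"

definition Zf :: "nat \<Rightarrow> (nat \<Rightarrow> 'x) \<Rightarrow> 'v \<Rightarrow> ennreal" where
  "Zf k x w = (\<integral>\<^sup>+v. hfun k x w v \<partial>piV)"

definition Kc :: "nat \<Rightarrow> (nat \<Rightarrow> 'x) \<Rightarrow> 'v \<Rightarrow> 'v measure" where
  "Kc k x w = (if w \<in> space piV then density piV (\<lambda>v. hfun k x w v / Zf k x w) else piV)"

lemma hfun_meas2: "(\<lambda>z. hfun k x (fst z) (snd z)) \<in> borel_measurable (piV \<Otimes>\<^sub>M piV)"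
proof (cases "q \<le> k")
  case True
  have k1: "1 \<le> k" using True q1 by simp
  have "(\<lambda>z. ennreal (K k (x k) (snd z) (fst z))) \<in> borel_measurable (piV \<Otimes>\<^sub>M piV)"
    by (rule Kfac_measE[OF k1]) auto
  moreover have "(\<lambda>z. beta k x (snd z)) \<in> borel_measurable (piV \<Otimes>\<^sub>M piV)"
    using measurable_compose[OF measurable_snd[of piV piV] beta_meas] by simp
  ultimately show ?thesis using True unfolding hfun_def by (simp add: borel_measurable_times_ennreal)
next
  case False
  then show ?thesis unfolding hfun_def using measurable_compose[OF measurable_snd[of piV piV] beta_meas] by simp
qed

lemma hfun_meas: "w \<in> space piV \<Longrightarrow> hfun k x w \<in> borel_measurable piV"
proof -
  assume w: "w \<in> space piV"
  show ?thesis
  proof (cases "q \<le> k")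
    case True
    have k1: "1 \<le> k" using True q1 by simp
    have "(\<lambda>v. ennreal (K k (x k) v w)) \<in> borel_measurable piV"
      by (rule Kfac_measE[OF k1]) (use w in auto)
    then show ?thesis using True beta_meas unfolding hfun_def by (simp add: borel_measurable_times_ennreal)
  next
    case False
    then show ?thesis unfolding hfun_def using beta_meas by simp
  qed
qed

definition ch :: "nat \<Rightarrow> real" where "ch k = (if q \<le> k then \<nu> k else 1) * cb k"

lemma ch_pos: "0 < ch k"
  unfolding ch_def using cb_pos H2_pos q1 by auto

lemma hfun_bounds: "v \<in> space piV \<Longrightarrow> w \<in> space piV \<Longrightarrow> ennreal (ch k) \<le> hfun k x w v \<and> hfun k x w v \<le> 1"
proof -
  assume v: "v \<in> space piV" and w: "w \<in> space piV"
  have b: "ennreal (cb k) \<le> beta k x v" "beta k x v \<le> 1" using beta_bounds[OF v] by auto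
  show ?thesis
  proof (cases "q \<le> k")
    case True
    have k1: "1 \<le> k" using True q1 by simp
    have kk: "\<nu> k \<le> K k (x k) v w" "K k (x k) v w \<le> 1" using H2 k1 v w by auto
    have "0 \<le> \<nu> k" using H2_pos k1 by (auto intro: less_imp_le)
    moreover have "0 \<le> cb k" using cb_pos by (auto intro: less_imp_le)
    ultimately have "ennreal (\<nu> k * cb k) \<le> ennreal (K k (x k) v w) * beta k x v"
      using kk b by (simp add: ennreal_mult mult_mono)
    moreover have "ennreal (K k (x k) v w) * beta k x v \<le> 1"
      using kk b mult_mono[of "ennreal (K k (x k) v w)" 1 "beta k x v" 1] by simp
    ultimately show ?thesis using True unfolding hfun_def ch_def by simp
  next
    case False
    then show ?thesis unfolding hfun_def ch_def using b by simp
  qed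
qed

lemma Zf_bounds: "w \<in> space piV \<Longrightarrow> ennreal (ch k) \<le> Zf k x w \<and> Zf k x w \<le> 1"
proof -
  assume w: "w \<in> space piV"
  have "(\<integral>\<^sup>+v. ennreal (ch k) \<partial>piV) \<le> Zf k x w" unfolding Zf_def
    by (rule nn_integral_mono) (use hfun_bounds w in auto)
  moreover have "Zf k x w \<le> (\<integral>\<^sup>+v. 1 \<partial>piV)" unfolding Zf_def
    by (rule nn_integral_mono) (use hfun_bounds w in auto)
  ultimately show ?thesis by (simp add: P.emeasure_space_1)
qed

lemma Zf_pos: "w \<in> space piV \<Longrightarrow> Zf k x w \<noteq> 0 \<and> Zf k x w < top"
proof -
  assume w: "w \<in> space piV"
  have "0 < ennreal (ch k)" using ch_pos by simp
  then show ?thesis using Zf_bounds[OF w, of k x] by (auto simp: top_unique intro: order.strict_trans1)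
qed

lemma Kc_sets: "sets (Kc k x w) = sets piV"
  unfolding Kc_def by simp

lemma Kc_emeasure: "w \<in> space piV \<Longrightarrow> A \<in> sets piV \<Longrightarrow>
  emeasure (Kc k x w) A = (\<integral>\<^sup>+v. hfun k x w v * indicator A v \<partial>piV) / Zf k x w"
proof -
  assume w: "w \<in> space piV" and A: "A \<in> sets piV"
  have "emeasure (Kc k x w) A = (\<integral>\<^sup>+v. hfun k x w v / Zf k x w * indicator A v \<partial>piV)"
    unfolding Kc_def using w A hfun_meas[OF w] by (simp add: emeasure_density)
  also have "\<dots> = (\<integral>\<^sup>+v. hfun k x w v * indicator A v / Zf k x w \<partial>piV)"
    by (rule nn_integral_cong) (simp add: divide_ennreal_def mult_ac)
  also have "\<dots> = (\<integral>\<^sup>+v. hfun k x w v * indicator A v \<partial>piV) / Zf k x w"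
    by (rule nn_integral_divide) (use A hfun_meas[OF w] in simp)
  finally show ?thesis .
qed

lemma Kc_prob: "prob_space (Kc k x w)"
proof (cases "w \<in> space piV")
  case True
  have "emeasure (Kc k x w) (space (Kc k x w)) = 1"
  proof -
    have sp: "space (Kc k x w) = space piV" using True unfolding Kc_def by simp
    have "emeasure (Kc k x w) (space piV) = (\<integral>\<^sup>+v. hfun k x w v * indicator (space piV) v \<partial>piV) / Zf k x w"
      by (rule Kc_emeasure[OF True]) simp
    also have "(\<integral>\<^sup>+v. hfun k x w v * indicator (space piV) v \<partial>piV) = Zf k x w"
      unfolding Zf_def by (rule nn_integral_cong) simp
    finally show ?thesis using sp Zf_pos[OF True, of k x] by simp
  qed
  then show ?thesis by (rule prob_spaceI)
next
  case False
  then show ?thesis unfolding Kc_def using piV by simp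
qed

lemma Kc_measure: "w \<in> space piV \<Longrightarrow> A \<in> sets piV \<Longrightarrow>
  ennreal (measure (Kc k x w) A) = (\<integral>\<^sup>+v. hfun k x w v * indicator A v \<partial>piV) / Zf k x w"
proof -
  assume w: "w \<in> space piV" and A: "A \<in> sets piV"
  interpret KP: prob_space "Kc k x w" by (rule Kc_prob)
  have "A \<in> sets (Kc k x w)" using A by (simp add: Kc_sets)
  then have "ennreal (measure (Kc k x w) A) = emeasure (Kc k x w) A" by (simp add: KP.emeasure_eq_measure)
  then show ?thesis using Kc_emeasure[OF w A] by simp
qed

lemma Kc_meas: "A \<in> sets piV \<Longrightarrow> (\<lambda>w. measure (Kc k x w) A) \<in> borel_measurable piV"
proof -
  assume A: "A \<in> sets piV"
  have m1: "(\<lambda>w. \<integral>\<^sup>+v. hfun k x w v * indicator A v \<partial>piV) \<in> borel_measurable piV"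
  proof (rule P.borel_measurable_nn_integral)
    have "(\<lambda>z. hfun k x (fst z) (snd z) * indicator A (snd z)) \<in> borel_measurable (piV \<Otimes>\<^sub>M piV)"
      using hfun_meas2 A by (intro borel_measurable_times_ennreal) (auto intro: measurable_compose[OF measurable_snd])
    then show "(\<lambda>(w, v). hfun k x w v * indicator A v) \<in> borel_measurable (piV \<Otimes>\<^sub>M piV)"
      by (simp add: case_prod_beta')
  qed
  have m2: "(\<lambda>w. Zf k x w) \<in> borel_measurable piV" unfolding Zf_def
    using hfun_meas2 by (intro P.borel_measurable_nn_integral) (simp add: case_prod_beta')
  have "(\<lambda>w. enn2real ((\<integral>\<^sup>+v. hfun k x w v * indicator A v \<partial>piV) / Zf k x w)) \<in> borel_measurable piV"
    using m1 m2 by measurable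
  then show ?thesis
  proof (rule measurable_cong[THEN iffD1, rotated])
    fix w assume w: "w \<in> space piV"
    have "0 \<le> measure (Kc k x w) A" by simp
    then show "enn2real ((\<integral>\<^sup>+v. hfun k x w v * indicator A v \<partial>piV) / Zf k x w) = measure (Kc k x w) A"
      using Kc_measure[OF w A] by (metis enn2real_ennreal)
  qed
qed


abbreviation VS :: "nat set \<Rightarrow> (nat \<Rightarrow> 'v) measure" where
  "VS I \<equiv> PiM I (\<lambda>_. piV)"

lemma VS_prob: "prob_space (VS I)"
  by (rule prob_space_PiM) (simp add: piV)

lemma comp_meas: "i \<in> I \<Longrightarrow> (\<lambda>a. a i) \<in> VS I \<rightarrow>\<^sub>M piV"
  by simp

lemma Kprod_meas:
  assumes "\<And>i. i \<in> J \<Longrightarrow> 1 \<le> i" "\<And>i. i \<in> J \<Longrightarrow> i \<in> I" "\<And>i. i \<in> J \<Longrightarrow> Suc i \<in> I"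
  shows "(\<lambda>a. \<Prod>i\<in>J. ennreal (K i (x i) (a i) (a (Suc i)))) \<in> borel_measurable (VS I)"
proof (rule borel_measurable_prod_ennreal)
  fix i assume i: "i \<in> J"
  show "(\<lambda>a. ennreal (K i (x i) (a i) (a (Suc i)))) \<in> borel_measurable (VS I)"
    by (rule Kfac_measE) (use assms i in auto)
qed

lemma lemB:
  assumes g: "g \<in> borel_measurable piV"
  shows "(\<integral>\<^sup>+a. (\<Prod>i\<in>{q..<Suc m}. ennreal (K i (x i) (a i) (a (Suc i)))) * g (a (Suc m)) \<partial>VS {1..Suc m})
         = (\<integral>\<^sup>+v. beta (Suc m) x v * g v \<partial>piV)"
  using g
proof (induction m arbitrary: g)
  case 0
  interpret PS: product_sigma_finite "\<lambda>_::nat. piV" by (rule psf_V)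
  have "{q..<Suc 0} = {}" using q1 by auto
  then show ?case using PS.product_nn_integral_singleton[OF "0.prems", of 1] q1 by simp
next
  case (Suc m)
  interpret PS: product_sigma_finite "\<lambda>_::nat. piV" by (rule psf_V)
  define k where "k = Suc (Suc m)"
  have ins: "{1..Suc (Suc m)} = insert k {1..Suc m}" unfolding k_def by auto
  let ?F = "\<lambda>a. (\<Prod>i\<in>{q..<k}. ennreal (K i (x i) (a i) (a (Suc i)))) * g (a k)"
  have Fm: "?F \<in> borel_measurable (VS (insert k {1..Suc m}))"
  proof (rule borel_measurable_times_ennreal)
    show "(\<lambda>a. \<Prod>i\<in>{q..<k}. ennreal (K i (x i) (a i) (a (Suc i)))) \<in> borel_measurable (VS (insert k {1..Suc m}))"
      by (rule Kprod_meas) (use q1 in \<open>auto simp: k_def\<close>)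
    show "(\<lambda>a. g (a k)) \<in> borel_measurable (VS (insert k {1..Suc m}))"
      using measurable_compose[OF comp_meas[of k "insert k {1..Suc m}"] Suc.prems] by simp
  qed
  have "(\<integral>\<^sup>+a. ?F a \<partial>VS {1..Suc (Suc m)}) = (\<integral>\<^sup>+y. (\<integral>\<^sup>+a. ?F (a(k := y)) \<partial>VS {1..Suc m}) \<partial>piV)"
    unfolding ins by (rule PS.product_nn_integral_insert_rev) (use Fm in \<open>auto simp: k_def\<close>)
  also have "\<dots> = (\<integral>\<^sup>+y. beta k x y * g y \<partial>piV)"
  proof (rule nn_integral_cong)
    fix y assume y: "y \<in> space piV"
    show "(\<integral>\<^sup>+a. ?F (a(k := y)) \<partial>VS {1..Suc m}) = beta k x y * g y"
    proof (cases "q \<le> Suc m")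
      case True
      have m1: "1 \<le> Suc m" by simp
      let ?G = "\<lambda>a. (\<Prod>i\<in>{q..<Suc m}. ennreal (K i (x i) (a i) (a (Suc i)))) * ennreal (K (Suc m) (x (Suc m)) (a (Suc m)) y)"
      have "(\<integral>\<^sup>+a. ?F (a(k := y)) \<partial>VS {1..Suc m}) = (\<integral>\<^sup>+a. ?G a * g y \<partial>VS {1..Suc m})"
      proof (rule nn_integral_cong)
        fix a assume a: "a \<in> space (VS {1..Suc m})"
        have "{q..<k} = insert (Suc m) {q..<Suc m}" using True unfolding k_def by auto
        moreover have "(\<Prod>i\<in>{q..<Suc m}. ennreal (K i (x i) ((a(k := y)) i) ((a(k := y)) (Suc i))))
            = (\<Prod>i\<in>{q..<Suc m}. ennreal (K i (x i) (a i) (a (Suc i))))"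
          by (rule prod.cong) (auto simp: k_def)
        ultimately show "?F (a(k := y)) = ?G a * g y" by (simp add: k_def mult_ac)
      qed
      also have "\<dots> = (\<integral>\<^sup>+a. ?G a \<partial>VS {1..Suc m}) * g y"
      proof (rule nn_integral_multc)
        show "?G \<in> borel_measurable (VS {1..Suc m})"
        proof (rule borel_measurable_times_ennreal)
          show "(\<lambda>a. \<Prod>i\<in>{q..<Suc m}. ennreal (K i (x i) (a i) (a (Suc i)))) \<in> borel_measurable (VS {1..Suc m})"
            by (rule Kprod_meas) (use q1 in auto)
          show "(\<lambda>a. ennreal (K (Suc m) (x (Suc m)) (a (Suc m)) y)) \<in> borel_measurable (VS {1..Suc m})"
            by (rule Kfac_measE) (use y in auto)
        qed
      qed
      also have "(\<integral>\<^sup>+a. ?G a \<partial>VS {1..Suc m}) = (\<integral>\<^sup>+v. beta (Suc m) x v * ennreal (K (Suc m) (x (Suc m)) v y) \<partial>piV)"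
        by (rule Suc.IH) (rule Kfac_measE, use y in auto)
      also have "\<dots> = beta k x y" unfolding k_def using True by (simp add: mult_ac)
      finally show ?thesis .
    next
      case False
      then have "{q..<k} = {}" unfolding k_def by auto
      then have "(\<integral>\<^sup>+a. ?F (a(k := y)) \<partial>VS {1..Suc m}) = (\<integral>\<^sup>+a. g y \<partial>VS {1..Suc m})" by simp
      also have "\<dots> = g y" using prob_space.emeasure_space_1[OF VS_prob] by simp
      finally show ?thesis using False unfolding k_def by simp
    qed
  qed
  finally show ?case unfolding k_def .
qed


definition rightf :: "nat \<Rightarrow> (nat \<Rightarrow> 'v) \<Rightarrow> (nat \<Rightarrow> 'x) \<Rightarrow> ennreal" where
  "rightf k b x = (\<Prod>i\<in>{i\<in>{q..n}. k < i}. ennreal (K i (x i) (b i) (b (Suc i))))"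

definition Rf :: "nat \<Rightarrow> (nat \<Rightarrow> 'v) \<Rightarrow> (nat \<Rightarrow> 'x) \<Rightarrow> ennreal" where
  "Rf k b x = (\<integral>\<^sup>+u. rightf k (b(Suc n := u)) x \<partial>piV)"

definition rho2 :: "(nat \<Rightarrow> 'v) \<Rightarrow> (nat \<Rightarrow> 'x) \<Rightarrow> ennreal" where
  "rho2 v x = (\<Prod>i\<in>{q..n}. ennreal (K i (x i) (v i) (v (Suc i))))"

lemma rightf_meas: "k < n \<Longrightarrow> (\<lambda>b. rightf k b x) \<in> borel_measurable (VS {Suc k..Suc n})"
  unfolding rightf_def by (rule Kprod_meas) (use q1 in auto)

lemma Rf_meas1: "k < n \<Longrightarrow> b \<in> space (VS {Suc k..n}) \<Longrightarrow> (\<lambda>u. rightf k (b(Suc n := u)) x) \<in> borel_measurable piV"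
proof -
  assume k: "k < n" and b: "b \<in> space (VS {Suc k..n})"
  have ins: "insert (Suc n) {Suc k..n} = {Suc k..Suc n}" using k by auto
  have "(\<lambda>u. b(Suc n := u)) \<in> piV \<rightarrow>\<^sub>M VS (insert (Suc n) {Suc k..n})"
    using measurable_component_update[OF b, of "Suc n"] by simp
  then have "(\<lambda>u. b(Suc n := u)) \<in> piV \<rightarrow>\<^sub>M VS {Suc k..Suc n}" by (simp only: ins)
  from measurable_compose[OF this rightf_meas[OF k]] show ?thesis by simp
qed

lemma Vpart:
  assumes k: "1 \<le> k" "k < n"
    and G: "(\<lambda>z. G (fst z) (snd z)) \<in> borel_measurable (piV \<Otimes>\<^sub>M VS {Suc k..n})"
  shows "(\<integral>\<^sup>+v. rho2 v x * G (v k) (restrict v {Suc k..n}) \<partial>VS {1..Suc n})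
       = (\<integral>\<^sup>+b. Rf k b x * (\<integral>\<^sup>+u. hfun k x (b (Suc k)) u * G u b \<partial>piV) \<partial>VS {Suc k..n})"
proof -
  interpret PS: product_sigma_finite "\<lambda>_::nat. piV" by (rule psf_V)
  define S where "S = {Suc k..n}"
  define I where "I = {Suc k..Suc n}"
  define J where "J = {1..k}"
  have IJ: "I \<inter> J = {}" "finite I" "finite J" unfolding I_def J_def by auto
  have UIJ: "{1..Suc n} = I \<union> J" unfolding I_def J_def using k by auto
  have SI: "S \<subseteq> I" unfolding S_def I_def by auto
  let ?f = "\<lambda>v. rho2 v x * G (v k) (restrict v S)"
  have Gc: "(\<lambda>v. G v c) \<in> borel_measurable piV" if c: "c \<in> space (VS S)" for c
  proof -
    have "(\<lambda>v. (v, c)) \<in> piV \<rightarrow>\<^sub>M piV \<Otimes>\<^sub>M VS S" using c by simp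
    from measurable_compose[OF this G[folded S_def]] show ?thesis by simp
  qed
  have fm: "?f \<in> borel_measurable (VS (I \<union> J))"
  proof (rule borel_measurable_times_ennreal)
    show "(\<lambda>v. rho2 v x) \<in> borel_measurable (VS (I \<union> J))"
      unfolding rho2_def by (rule Kprod_meas) (use q1 k in \<open>auto simp: I_def J_def\<close>)
    have "(\<lambda>v. (v k, restrict v S)) \<in> VS (I \<union> J) \<rightarrow>\<^sub>M piV \<Otimes>\<^sub>M VS S"
    proof (rule measurable_Pair)
      show "(\<lambda>v. v k) \<in> VS (I \<union> J) \<rightarrow>\<^sub>M piV" using k by (simp add: J_def)
      show "(\<lambda>v. restrict v S) \<in> VS (I \<union> J) \<rightarrow>\<^sub>M VS S" using SI by (intro measurable_restrict_subset) auto
    qed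
    from measurable_compose[OF this G[folded S_def]]
    show "(\<lambda>v. G (v k) (restrict v S)) \<in> borel_measurable (VS (I \<union> J))" by simp
  qed
  have "(\<integral>\<^sup>+v. ?f v \<partial>VS {1..Suc n}) = (\<integral>\<^sup>+b. (\<integral>\<^sup>+a. ?f (merge I J (b, a)) \<partial>VS J) \<partial>VS I)"
    unfolding UIJ by (rule PS.product_nn_integral_fold[OF IJ fm])
  also have "\<dots> = (\<integral>\<^sup>+b. rightf k b x * (\<integral>\<^sup>+u. hfun k x (b (Suc k)) u * G u (restrict b S) \<partial>piV) \<partial>VS I)"
  proof (rule nn_integral_cong)
    fix b assume b: "b \<in> space (VS I)"
    define w where "w = b (Suc k)"
    have w: "w \<in> space piV" using b unfolding w_def I_def using k by (auto simp: space_PiM)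
    have rbS: "restrict b S \<in> space (VS S)" using b SI by (auto simp: space_PiM)
    define g where "g v = (if q \<le> k then ennreal (K k (x k) v w) else 1) * G v (restrict b S)" for v
    have gm: "g \<in> borel_measurable piV"
    proof -
      have "(\<lambda>v. if q \<le> k then ennreal (K k (x k) v w) else 1) \<in> borel_measurable piV"
      proof (cases "q \<le> k")
        case True
        then show ?thesis using Kfac_measE[of k "\<lambda>v. v" piV "\<lambda>_. w" "x k"] k w by simp
      qed simp
      then show ?thesis unfolding g_def using Gc[OF rbS] by (intro borel_measurable_times_ennreal)
    qed
    have eq: "?f (merge I J (b, a)) = rightf k b x *
        ((\<Prod>i\<in>{q..<Suc (k - 1)}. ennreal (K i (x i) (a i) (a (Suc i)))) * g (a (Suc (k - 1))))"
      if a: "a \<in> space (VS J)" for a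
    proof -
      let ?m = "merge I J (b, a)"
      have mI: "?m i = b i" if "i \<in> I" for i using that IJ by simp
      have mJ: "?m i = a i" if "i \<in> J" for i using that IJ by simp
      have sk: "Suc (k - 1) = k" using k by simp
      have split: "{q..n} = {i\<in>{q..n}. k < i} \<union> {q..<Suc k}" using k by auto
      have disj: "{i\<in>{q..n}. k < i} \<inter> {q..<Suc k} = {}" by auto
      have r2: "rho2 ?m x = rightf k b x * (\<Prod>i\<in>{q..<Suc k}. ennreal (K i (x i) (?m i) (?m (Suc i))))"
        unfolding rho2_def rightf_def
        apply (subst split)
        apply (subst prod.union_disjoint)
        using disj apply auto[3]
        apply (rule arg_cong2[where f="(*)"])
         apply (rule prod.cong, simp)
         apply (subst mI, simp add: I_def, subst mI, simp add: I_def, simp)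
        apply simp
        done
      have r3: "(\<Prod>i\<in>{q..<Suc k}. ennreal (K i (x i) (?m i) (?m (Suc i))))
          = (\<Prod>i\<in>{q..<k}. ennreal (K i (x i) (a i) (a (Suc i)))) * (if q \<le> k then ennreal (K k (x k) (a k) w) else 1)"
      proof (cases "q \<le> k")
        case True
        have "{q..<Suc k} = insert k {q..<k}" using True by auto
        then have "(\<Prod>i\<in>{q..<Suc k}. ennreal (K i (x i) (?m i) (?m (Suc i))))
            = ennreal (K k (x k) (?m k) (?m (Suc k))) * (\<Prod>i\<in>{q..<k}. ennreal (K i (x i) (?m i) (?m (Suc i))))"
          by simp
        also have "?m k = a k" using mJ[of k] k by (simp add: J_def)
        also have "?m (Suc k) = w" using mI[of "Suc k"] k by (simp add: I_def w_def)
        also have "(\<Prod>i\<in>{q..<k}. ennreal (K i (x i) (?m i) (?m (Suc i)))) = (\<Prod>i\<in>{q..<k}. ennreal (K i (x i) (a i) (a (Suc i))))"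
        proof (rule prod.cong)
          fix i assume i: "i \<in> {q..<k}"
          have "?m i = a i" using mJ[of i] i q1 by (simp add: J_def)
          moreover have "?m (Suc i) = a (Suc i)" using mJ[of "Suc i"] i q1 by (simp add: J_def)
          ultimately show "ennreal (K i (x i) (?m i) (?m (Suc i))) = ennreal (K i (x i) (a i) (a (Suc i)))" by simp
        qed simp
        finally show ?thesis using True by (simp add: mult_ac)
      next
        case False
        then show ?thesis by simp
      qed
      have r4: "restrict ?m S = restrict b S"
        using mI SI by (auto simp: restrict_def fun_eq_iff)
      have r5: "?m k = a k" using mJ[of k] k by (simp add: J_def)
      show ?thesis unfolding sk r2 r3 r4 r5 g_def by (simp add: mult_ac)
    qed
    have "(\<integral>\<^sup>+a. ?f (merge I J (b, a)) \<partial>VS J) = (\<integral>\<^sup>+a. rightf k b x *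
        ((\<Prod>i\<in>{q..<Suc (k - 1)}. ennreal (K i (x i) (a i) (a (Suc i)))) * g (a (Suc (k - 1)))) \<partial>VS J)"
      by (rule nn_integral_cong) (rule eq)
    also have "\<dots> = rightf k b x * (\<integral>\<^sup>+a. (\<Prod>i\<in>{q..<Suc (k - 1)}. ennreal (K i (x i) (a i) (a (Suc i)))) * g (a (Suc (k - 1))) \<partial>VS J)"
    proof (rule nn_integral_cmult)
      have sk: "Suc (k - 1) = k" using k by simp
      show "(\<lambda>a. (\<Prod>i\<in>{q..<Suc (k - 1)}. ennreal (K i (x i) (a i) (a (Suc i)))) * g (a (Suc (k - 1)))) \<in> borel_measurable (VS J)"
        unfolding sk
      proof (rule borel_measurable_times_ennreal)
        show "(\<lambda>a. \<Prod>i\<in>{q..<k}. ennreal (K i (x i) (a i) (a (Suc i)))) \<in> borel_measurable (VS J)"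
          by (rule Kprod_meas) (use q1 in \<open>auto simp: J_def\<close>)
        show "(\<lambda>a. g (a k)) \<in> borel_measurable (VS J)"
          using measurable_compose[OF comp_meas[of k J] gm] k by (simp add: J_def)
      qed
    qed
    also have "(\<integral>\<^sup>+a. (\<Prod>i\<in>{q..<Suc (k - 1)}. ennreal (K i (x i) (a i) (a (Suc i)))) * g (a (Suc (k - 1))) \<partial>VS J)
        = (\<integral>\<^sup>+v. beta (Suc (k - 1)) x v * g v \<partial>piV)"
    proof -
      have "J = {1..Suc (k - 1)}" using k by (simp add: J_def)
      then show ?thesis using lemB[OF gm, of "k - 1" x] by simp
    qed
    also have "(\<integral>\<^sup>+v. beta (Suc (k - 1)) x v * g v \<partial>piV) = (\<integral>\<^sup>+u. hfun k x (b (Suc k)) u * G u (restrict b S) \<partial>piV)"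
    proof -
      have sk: "Suc (k - 1) = k" using k by simp
      show ?thesis unfolding sk g_def hfun_def w_def by (simp add: mult_ac)
    qed
    finally show "(\<integral>\<^sup>+a. ?f (merge I J (b, a)) \<partial>VS J) = rightf k b x * (\<integral>\<^sup>+u. hfun k x (b (Suc k)) u * G u (restrict b S) \<partial>piV)" .
  qed
  also have "\<dots> = (\<integral>\<^sup>+b. Rf k b x * (\<integral>\<^sup>+u. hfun k x (b (Suc k)) u * G u b \<partial>piV) \<partial>VS S)"
  proof -
    have ins: "I = insert (Suc n) S" unfolding I_def S_def using k by auto
    have nS: "Suc n \<notin> S" "finite S" unfolding S_def by auto
    define Phi where "Phi b = (\<integral>\<^sup>+u. hfun k x (b (Suc k)) u * G u b \<partial>piV)" for b
    have Phim: "Phi \<in> borel_measurable (VS S)" unfolding Phi_def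
    proof (rule P.borel_measurable_nn_integral)
      have h: "(\<lambda>z. hfun k x (fst z (Suc k)) (snd z)) \<in> borel_measurable (VS S \<Otimes>\<^sub>M piV)"
      proof -
        have "(\<lambda>z. (fst z (Suc k), snd z)) \<in> VS S \<Otimes>\<^sub>M piV \<rightarrow>\<^sub>M piV \<Otimes>\<^sub>M piV"
          using k by (intro measurable_Pair) (auto simp: S_def)
        from measurable_compose[OF this hfun_meas2] show ?thesis by simp
      qed
      have g: "(\<lambda>z. G (snd z) (fst z)) \<in> borel_measurable (VS S \<Otimes>\<^sub>M piV)"
      proof -
        have "(\<lambda>z. (snd z, fst z)) \<in> VS S \<Otimes>\<^sub>M piV \<rightarrow>\<^sub>M piV \<Otimes>\<^sub>M VS S" by simp
        from measurable_compose[OF this G[folded S_def]] show ?thesis by simp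
      qed
      show "(\<lambda>(b, u). hfun k x (b (Suc k)) u * G u b) \<in> borel_measurable (VS S \<Otimes>\<^sub>M piV)"
        using borel_measurable_times_ennreal[OF h g] by (simp add: case_prod_beta')
    qed
    have Fm: "(\<lambda>b. rightf k b x * Phi (restrict b S)) \<in> borel_measurable (VS (insert (Suc n) S))"
    proof (rule borel_measurable_times_ennreal)
      show "(\<lambda>b. rightf k b x) \<in> borel_measurable (VS (insert (Suc n) S))"
        using rightf_meas[OF k(2)] ins by (simp add: I_def)
      have "(\<lambda>b. restrict b S) \<in> VS (insert (Suc n) S) \<rightarrow>\<^sub>M VS S" by (intro measurable_restrict_subset) auto
      from measurable_compose[OF this Phim] show "(\<lambda>b. Phi (restrict b S)) \<in> borel_measurable (VS (insert (Suc n) S))" by simp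
    qed
    have "(\<integral>\<^sup>+b. rightf k b x * Phi (restrict b S) \<partial>VS I) = (\<integral>\<^sup>+b. (\<integral>\<^sup>+u. rightf k (b(Suc n := u)) x * Phi (restrict (b(Suc n := u)) S) \<partial>piV) \<partial>VS S)"
      unfolding ins by (rule PS.product_nn_integral_insert[OF nS(2) nS(1) Fm])
    also have "\<dots> = (\<integral>\<^sup>+b. Rf k b x * Phi b \<partial>VS S)"
    proof (rule nn_integral_cong)
      fix b assume b: "b \<in> space (VS S)"
      have "\<And>u. restrict (b(Suc n := u)) S = b"
        using b nS(1) by (auto simp: space_PiM restrict_def fun_eq_iff PiE_def extensional_def)
      then have "(\<integral>\<^sup>+u. rightf k (b(Suc n := u)) x * Phi (restrict (b(Suc n := u)) S) \<partial>piV)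
          = (\<integral>\<^sup>+u. rightf k (b(Suc n := u)) x * Phi b \<partial>piV)" by simp
      also have "\<dots> = Rf k b x * Phi b" unfolding Rf_def
        by (rule nn_integral_multc) (rule Rf_meas1[OF k(2) b[unfolded S_def]])
      finally show "(\<integral>\<^sup>+u. rightf k (b(Suc n := u)) x * Phi (restrict (b(Suc n := u)) S) \<partial>piV) = Rf k b x * Phi b" .
    qed
    moreover have "Suc k \<in> S" unfolding S_def using k by auto
    ultimately show ?thesis unfolding Phi_def by simp
  qed
  finally show ?thesis unfolding S_def .
qed


abbreviation XS :: "nat set \<Rightarrow> (nat \<Rightarrow> 'x) measure" where
  "XS I \<equiv> PiM I (\<lambda>_. count_space (UNIV::'x set))"

lemma sf_VS: "sigma_finite_measure (VS I)"
  using VS_prob[of I] by (simp add: prob_space_imp_sigma_finite)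

lemma sf_XS: "finite I \<Longrightarrow> sigma_finite_measure (XS I)"
  unfolding Xs_eq by (rule sigma_finite_measure_count_space_countable) (simp add: countable_PiE)

lemma meas_pairX:
  assumes I: "finite I" and f: "\<And>x. x \<in> PiE I (\<lambda>_. UNIV) \<Longrightarrow> (\<lambda>a. f a x) \<in> A \<rightarrow>\<^sub>M B"
  shows "(\<lambda>z. f (fst z) (snd z)) \<in> A \<Otimes>\<^sub>M XS I \<rightarrow>\<^sub>M B"
proof (rule measurable_compose_countable'[where g=snd and I="PiE I (\<lambda>_. UNIV)" and f="\<lambda>x z. f (fst z) x"])
  fix x :: "nat \<Rightarrow> 'x" assume "x \<in> PiE I (\<lambda>_. UNIV)"
  from measurable_compose[OF measurable_fst[of A "XS I"] f[OF this]] show "(\<lambda>z. f (fst z) x) \<in> A \<Otimes>\<^sub>M XS I \<rightarrow>\<^sub>M B" by simp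
next
  have "snd \<in> A \<Otimes>\<^sub>M XS I \<rightarrow>\<^sub>M XS I" by simp
  then show "snd \<in> A \<Otimes>\<^sub>M XS I \<rightarrow>\<^sub>M count_space (PiE I (\<lambda>_. UNIV))" using Xs_eq[OF I] by simp
  show "countable (PiE I (\<lambda>_. UNIV::'x set))" using I by (simp add: countable_PiE)
qed

abbreviation MM where "MM \<equiv> joint_law n piV K"

abbreviation NN :: "nat \<Rightarrow> ((nat \<Rightarrow> 'v) \<times> (nat \<Rightarrow> 'x)) measure" where
  "NN k \<equiv> VS {Suc k..n} \<Otimes>\<^sub>M XS {q..n}"

definition TT :: "nat \<Rightarrow> (nat \<Rightarrow> 'v) \<times> (nat \<Rightarrow> 'x) \<Rightarrow> (nat \<Rightarrow> 'v) \<times> (nat \<Rightarrow> 'x)" where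
  "TT k \<omega> = (restrict (fst \<omega>) {Suc k..n}, Xobs q n \<omega>)"

definition rho :: "(nat \<Rightarrow> 'v) \<times> (nat \<Rightarrow> 'x) \<Rightarrow> ennreal" where
  "rho = (\<lambda>(v, x). ennreal (\<Prod>i=1..n. K i (x i) (v i) (v (Suc i))))"

lemma MM_def': "MM = density (VS {1..n+1} \<Otimes>\<^sub>M XS {1..n}) rho"
  unfolding joint_law_def rho_def by simp

lemma rho_meas: "rho \<in> borel_measurable (VS {1..n+1} \<Otimes>\<^sub>M XS {1..n})"
proof -
  have m: "(\<lambda>v. ennreal (\<Prod>i=1..n. K i (x i) (v i) (v (Suc i)))) \<in> borel_measurable (VS {1..n+1})" for x :: "nat \<Rightarrow> 'x"
  proof -
    have "(\<lambda>v. \<Prod>i=1..n. K i (x i) (v i) (v (Suc i))) \<in> borel_measurable (VS {1..n+1})"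
    proof (rule borel_measurable_prod)
      fix i assume "i \<in> {1..n}"
      then show "(\<lambda>v. K i (x i) (v i) (v (Suc i))) \<in> borel_measurable (VS {1..n+1})"
        by (intro Kfac_meas) auto
    qed
    then show ?thesis by simp
  qed
  have "(\<lambda>z. (\<lambda>v x. ennreal (\<Prod>i=1..n. K i (x i) (v i) (v (Suc i)))) (fst z) (snd z)) \<in> borel_measurable (VS {1..n+1} \<Otimes>\<^sub>M XS {1..n})"
    by (rule meas_pairX) (use m in auto)
  then show ?thesis unfolding rho_def by (simp add: case_prod_beta')
qed

lemma Rf_meas: "k < n \<Longrightarrow> (\<lambda>b. Rf k b x) \<in> borel_measurable (VS {Suc k..n})"
proof -
  assume k: "k < n"
  have "(\<lambda>z. (fst z)(Suc n := snd z)) \<in> VS {Suc k..n} \<Otimes>\<^sub>M piV \<rightarrow>\<^sub>M VS {Suc k..Suc n}"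
  proof -
    have "(\<lambda>z i. ((fst z)(Suc n := snd z)) i) \<in> VS {Suc k..n} \<Otimes>\<^sub>M piV \<rightarrow>\<^sub>M VS {Suc k..Suc n}"
    proof (rule measurable_PiM_single')
      fix i assume i: "i \<in> {Suc k..Suc n}"
      show "(\<lambda>z. ((fst z)(Suc n := snd z)) i) \<in> VS {Suc k..n} \<Otimes>\<^sub>M piV \<rightarrow>\<^sub>M piV"
      proof (cases "i = Suc n")
        case True
        then show ?thesis by simp
      next
        case False
        then have "i \<in> {Suc k..n}" using i by auto
        then show ?thesis using False by simp
      qed
    next
      show "(\<lambda>z i. ((fst z)(Suc n := snd z)) i) \<in> space (VS {Suc k..n} \<Otimes>\<^sub>M piV) \<rightarrow> (\<Pi>\<^sub>E i\<in>{Suc k..Suc n}. space piV)"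
        using k by (auto simp: space_pair_measure space_PiM PiE_def extensional_def Pi_def)
    qed
    then show ?thesis unfolding fun_upd_def .
  qed
  from measurable_compose[OF this rightf_meas[OF k]]
  have "(\<lambda>z. rightf k ((fst z)(Suc n := snd z)) x) \<in> borel_measurable (VS {Suc k..n} \<Otimes>\<^sub>M piV)" .
  then show ?thesis unfolding Rf_def by (intro P.borel_measurable_nn_integral) (simp add: case_prod_beta')
qed

lemma Phi_meas:
  assumes k: "k < n" and G: "(\<lambda>z. G (fst z) (snd z)) \<in> borel_measurable (piV \<Otimes>\<^sub>M NN k)"
  shows "(\<lambda>t. \<integral>\<^sup>+u. hfun k (snd t) (fst t (Suc k)) u * G u t \<partial>piV) \<in> borel_measurable (NN k)"
proof (rule P.borel_measurable_nn_integral[where f="\<lambda>t u. hfun k (snd t) (fst t (Suc k)) u * G u t"])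
  have h: "(\<lambda>z. hfun k (snd (fst z)) (fst (fst z) (Suc k)) (snd z)) \<in> borel_measurable (NN k \<Otimes>\<^sub>M piV)"
  proof -
    have "(\<lambda>z. hfun k (snd (fst z)) (fst (fst z) (Suc k)) (snd z)) = (\<lambda>z. (\<lambda>(b,u) x. hfun k x (b (Suc k)) u) (fst (fst z), snd z) (snd (fst z)))"
      by simp
    have m: "(\<lambda>z. hfun k x (fst z (Suc k)) (snd z)) \<in> borel_measurable (VS {Suc k..n} \<Otimes>\<^sub>M piV)" for x
    proof -
      have "(\<lambda>z. (fst z (Suc k), snd z)) \<in> VS {Suc k..n} \<Otimes>\<^sub>M piV \<rightarrow>\<^sub>M piV \<Otimes>\<^sub>M piV"
        using k by (intro measurable_Pair) auto
      from measurable_compose[OF this hfun_meas2] show ?thesis by simp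
    qed
    have "(\<lambda>z. (\<lambda>y x. hfun k x (fst y (Suc k)) (snd y)) ((fst (fst z), snd z)) (snd (fst z)))
        \<in> borel_measurable (NN k \<Otimes>\<^sub>M piV)"
    proof (rule measurable_compose_countable'[where I="PiE {q..n} (\<lambda>_. UNIV)" and g="\<lambda>z. snd (fst z)"])
      fix x assume "x \<in> PiE {q..n} (\<lambda>_. UNIV::'x set)"
      have "(\<lambda>z. (fst (fst z), snd z)) \<in> NN k \<Otimes>\<^sub>M piV \<rightarrow>\<^sub>M VS {Suc k..n} \<Otimes>\<^sub>M piV" by simp
      from measurable_compose[OF this m[of x]]
      show "(\<lambda>z. (\<lambda>y x. hfun k x (fst y (Suc k)) (snd y)) ((fst (fst z), snd z)) x) \<in> borel_measurable (NN k \<Otimes>\<^sub>M piV)" by simp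
    next
      have "(\<lambda>z. snd (fst z)) \<in> NN k \<Otimes>\<^sub>M piV \<rightarrow>\<^sub>M XS {q..n}" by simp
      then show "(\<lambda>z. snd (fst z)) \<in> NN k \<Otimes>\<^sub>M piV \<rightarrow>\<^sub>M count_space (PiE {q..n} (\<lambda>_. UNIV))" using Xs_eq[of "{q..n}"] by simp
      show "countable (PiE {q..n} (\<lambda>_. UNIV::'x set))" by (simp add: countable_PiE)
    qed
    then show ?thesis by simp
  qed
  have g: "(\<lambda>z. G (snd z) (fst z)) \<in> borel_measurable (NN k \<Otimes>\<^sub>M piV)"
  proof -
    have "(\<lambda>z. (snd z, fst z)) \<in> NN k \<Otimes>\<^sub>M piV \<rightarrow>\<^sub>M piV \<Otimes>\<^sub>M NN k" by simp
    from measurable_compose[OF this G] show ?thesis by simp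
  qed
  show "(\<lambda>(t, u). hfun k (snd t) (fst t (Suc k)) u * G u t) \<in> borel_measurable (NN k \<Otimes>\<^sub>M piV)"
    using borel_measurable_times_ennreal[OF h g] by (simp add: case_prod_beta')
qed


lemma Xpart:
  assumes v: "v \<in> space (VS {1..n+1})"
  shows "(\<integral>\<^sup>+x. rho (v, x) * F (restrict x {q..n}) \<partial>XS {1..n}) = (\<integral>\<^sup>+x. rho2 v x * F x \<partial>XS {q..n})"
proof -
  interpret PX: product_sigma_finite "\<lambda>_::nat. count_space (UNIV::'x set)" by (rule psf_X)
  define I1 where "I1 = {1..<q}"
  define Q where "Q = {q..n}"
  have IJ: "I1 \<inter> Q = {}" "finite I1" "finite Q" unfolding I1_def Q_def by auto
  have U: "{1..n} = I1 \<union> Q" unfolding I1_def Q_def using q1 qn by auto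
  have vi: "v i \<in> space piV" if "i \<in> {1..n+1}" for i using v that by (auto simp: space_PiM)
  define A where "A x1 = (\<Prod>i\<in>I1. ennreal (K i (x1 i) (v i) (v (Suc i))))" for x1
  define B where "B x2 = rho2 v x2 * F x2" for x2
  have "(\<integral>\<^sup>+x. rho (v, x) * F (restrict x Q) \<partial>XS {1..n})
      = (\<integral>\<^sup>+x1. (\<integral>\<^sup>+x2. rho (v, merge I1 Q (x1, x2)) * F (restrict (merge I1 Q (x1, x2)) Q) \<partial>XS Q) \<partial>XS I1)"
    unfolding U by (rule PX.product_nn_integral_fold[OF IJ]) (rule Xs_meas, use IJ in simp)
  also have "\<dots> = (\<integral>\<^sup>+x1. (\<integral>\<^sup>+x2. A x1 * B x2 \<partial>XS Q) \<partial>XS I1)"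
  proof (intro nn_integral_cong)
    fix x1 x2 assume x1: "x1 \<in> space (XS I1)" and x2: "x2 \<in> space (XS Q)"
    let ?m = "merge I1 Q (x1, x2)"
    have "rho (v, ?m) = (\<Prod>i\<in>{1..n}. ennreal (K i (?m i) (v i) (v (Suc i))))"
      unfolding rho_def apply simp apply (rule prod_ennreal[symmetric]) using vi by (auto intro!: K_nn)
    also have "\<dots> = (\<Prod>i\<in>I1. ennreal (K i (?m i) (v i) (v (Suc i)))) * (\<Prod>i\<in>Q. ennreal (K i (?m i) (v i) (v (Suc i))))"
      unfolding U using IJ by (simp add: prod.union_disjoint)
    also have "(\<Prod>i\<in>I1. ennreal (K i (?m i) (v i) (v (Suc i)))) = A x1"
      unfolding A_def using IJ by (intro prod.cong) auto
    also have "(\<Prod>i\<in>Q. ennreal (K i (?m i) (v i) (v (Suc i)))) = rho2 v x2"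
      unfolding rho2_def Q_def[symmetric] using IJ by (intro prod.cong) auto
    finally have r: "rho (v, ?m) = A x1 * rho2 v x2" .
    have "restrict ?m Q = x2" using x2 IJ by (auto simp: space_PiM restrict_def fun_eq_iff PiE_def extensional_def)
    then show "rho (v, ?m) * F (restrict ?m Q) = A x1 * B x2" using r unfolding B_def by (simp add: mult_ac)
  qed
  also have "\<dots> = (\<integral>\<^sup>+x1. A x1 * (\<integral>\<^sup>+x2. B x2 \<partial>XS Q) \<partial>XS I1)"
    by (intro nn_integral_cong nn_integral_cmult) (rule Xs_meas, use IJ in simp)
  also have "\<dots> = (\<integral>\<^sup>+x1. A x1 \<partial>XS I1) * (\<integral>\<^sup>+x2. B x2 \<partial>XS Q)"
    by (intro nn_integral_multc) (rule Xs_meas, use IJ in simp)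
  also have "(\<integral>\<^sup>+x1. A x1 \<partial>XS I1) = 1"
  proof -
    have "(\<integral>\<^sup>+x1. A x1 \<partial>XS I1) = (\<Prod>i\<in>I1. \<integral>\<^sup>+y. ennreal (K i y (v i) (v (Suc i))) \<partial>count_space UNIV)"
      unfolding A_def by (rule PX.product_nn_integral_prod) (use IJ in auto)
    also have "\<dots> = (\<Prod>i\<in>I1. 1)"
      by (intro prod.cong refl K_sum1) (use qn in \<open>auto simp: I1_def intro!: vi\<close>)
    finally show ?thesis by simp
  qed
  finally show ?thesis unfolding B_def Q_def by (simp only: mult_1)
qed

lemma core:
  assumes k: "1 \<le> k" "k < n" and G: "(\<lambda>z. G (fst z) (snd z)) \<in> borel_measurable (piV \<Otimes>\<^sub>M NN k)"
  shows "(\<integral>\<^sup>+\<omega>. G (fst \<omega> k) (TT k \<omega>) \<partial>MM)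
       = (\<integral>\<^sup>+t. Rf k (fst t) (snd t) * (\<integral>\<^sup>+u. hfun k (snd t) (fst t (Suc k)) u * G u t \<partial>piV) \<partial>NN k)"
proof -
  define S where "S = {Suc k..n}"
  define Q where "Q = {q..n}"
  let ?P = "VS {1..n+1}" and ?C = "XS {1..n}"
  interpret sfC: sigma_finite_measure ?C by (rule sf_XS) simp
  interpret PQ: pair_sigma_finite ?P "XS Q"
    by (intro pair_sigma_finite.intro sf_VS sf_XS) (simp add: Q_def)
  interpret SQ: pair_sigma_finite "VS S" "XS Q"
    by (intro pair_sigma_finite.intro sf_VS sf_XS) (simp add: Q_def)
  have TTe: "TT k \<omega> = (restrict (fst \<omega>) S, restrict (snd \<omega>) Q)" for \<omega>
    unfolding TT_def Xobs_def S_def Q_def by simp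
  have Gx: "(\<lambda>v. G (v k) (restrict v S, x)) \<in> borel_measurable ?P" if x: "x \<in> space (XS Q)" for x
  proof -
    have "(\<lambda>v. (v k, (restrict v S, x))) \<in> ?P \<rightarrow>\<^sub>M piV \<Otimes>\<^sub>M NN k"
    proof (intro measurable_Pair)
      show "(\<lambda>v. v k) \<in> ?P \<rightarrow>\<^sub>M piV" using k by simp
      show "(\<lambda>v. restrict v S) \<in> ?P \<rightarrow>\<^sub>M VS {Suc k..n}" unfolding S_def
        by (intro measurable_restrict_subset) auto
      show "(\<lambda>v. x) \<in> ?P \<rightarrow>\<^sub>M XS {q..n}" using x unfolding Q_def by simp
    qed
    from measurable_compose[OF this G] show ?thesis by simp
  qed
  have Gm: "(\<lambda>\<omega>. G (fst \<omega> k) (TT k \<omega>)) \<in> borel_measurable (?P \<Otimes>\<^sub>M ?C)"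
  proof -
    have "(\<lambda>z. (\<lambda>v x. G (v k) (restrict v S, restrict x Q)) (fst z) (snd z)) \<in> borel_measurable (?P \<Otimes>\<^sub>M ?C)"
    proof (rule meas_pairX)
      fix x :: "nat \<Rightarrow> 'x"
      have "restrict x Q \<in> space (XS Q)" by (simp add: space_PiM)
      from Gx[OF this] show "(\<lambda>v. G (v k) (restrict v S, restrict x Q)) \<in> borel_measurable ?P" .
    qed simp
    then show ?thesis by (simp add: TTe)
  qed
  have "(\<integral>\<^sup>+\<omega>. G (fst \<omega> k) (TT k \<omega>) \<partial>MM) = (\<integral>\<^sup>+\<omega>. rho \<omega> * G (fst \<omega> k) (TT k \<omega>) \<partial>(?P \<Otimes>\<^sub>M ?C))"
    unfolding MM_def' by (rule nn_integral_density[OF rho_meas Gm])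
  also have "\<dots> = (\<integral>\<^sup>+v. (\<integral>\<^sup>+x. rho (v, x) * G (v k) (restrict v S, restrict x Q) \<partial>?C) \<partial>?P)"
    by (subst sfC.nn_integral_fst[symmetric]) (use rho_meas Gm in \<open>auto simp: TTe\<close>)
  also have "\<dots> = (\<integral>\<^sup>+v. (\<integral>\<^sup>+x. rho2 v x * G (v k) (restrict v S, x) \<partial>XS Q) \<partial>?P)"
    by (rule nn_integral_cong) (unfold Q_def, rule Xpart)
  also have "\<dots> = (\<integral>\<^sup>+x. (\<integral>\<^sup>+v. rho2 v x * G (v k) (restrict v S, x) \<partial>?P) \<partial>XS Q)"
  proof (rule PQ.Fubini'[symmetric])
    have "(\<lambda>z. (\<lambda>v x. rho2 v x * G (v k) (restrict v S, x)) (fst z) (snd z)) \<in> borel_measurable (?P \<Otimes>\<^sub>M XS Q)"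
    proof (rule meas_pairX)
      fix x :: "nat \<Rightarrow> 'x" assume x: "x \<in> PiE Q (\<lambda>_. UNIV)"
      show "(\<lambda>v. rho2 v x * G (v k) (restrict v S, x)) \<in> borel_measurable ?P"
      proof (rule borel_measurable_times_ennreal)
        show "(\<lambda>v. rho2 v x) \<in> borel_measurable ?P" unfolding rho2_def
          by (rule Kprod_meas) (use q1 in auto)
        show "(\<lambda>v. G (v k) (restrict v S, x)) \<in> borel_measurable ?P" using x by (intro Gx) (simp add: space_PiM)
      qed
    qed (simp add: Q_def)
    then show "(\<lambda>(v, x). rho2 v x * G (v k) (restrict v S, x)) \<in> borel_measurable (?P \<Otimes>\<^sub>M XS Q)"
      by (simp add: case_prod_beta')
  qed
  also have "\<dots> = (\<integral>\<^sup>+x. (\<integral>\<^sup>+b. Rf k b x * (\<integral>\<^sup>+u. hfun k x (b (Suc k)) u * G u (b, x) \<partial>piV) \<partial>VS S) \<partial>XS Q)"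
  proof (rule nn_integral_cong)
    fix x assume x: "x \<in> space (XS Q)"
    have G': "(\<lambda>z. G (fst z) (snd z, x)) \<in> borel_measurable (piV \<Otimes>\<^sub>M VS {Suc k..n})"
    proof -
      have "(\<lambda>z. (fst z, (snd z, x))) \<in> piV \<Otimes>\<^sub>M VS {Suc k..n} \<rightarrow>\<^sub>M piV \<Otimes>\<^sub>M NN k"
        using x unfolding Q_def by simp
      from measurable_compose[OF this G] show ?thesis by simp
    qed
    have eq: "{1..n+1} = {1..Suc n}" by simp
    show "(\<integral>\<^sup>+v. rho2 v x * G (v k) (restrict v S, x) \<partial>?P) = (\<integral>\<^sup>+b. Rf k b x * (\<integral>\<^sup>+u. hfun k x (b (Suc k)) u * G u (b, x) \<partial>piV) \<partial>VS S)"
      unfolding S_def eq by (rule Vpart[OF k G'])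
  qed
  also have "\<dots> = (\<integral>\<^sup>+t. Rf k (fst t) (snd t) * (\<integral>\<^sup>+u. hfun k (snd t) (fst t (Suc k)) u * G u t \<partial>piV) \<partial>(VS S \<Otimes>\<^sub>M XS Q))"
  proof -
    have "(\<lambda>t. Rf k (fst t) (snd t) * (\<integral>\<^sup>+u. hfun k (snd t) (fst t (Suc k)) u * G u t \<partial>piV)) \<in> borel_measurable (VS S \<Otimes>\<^sub>M XS Q)"
    proof (rule borel_measurable_times_ennreal)
      show "(\<lambda>t. Rf k (fst t) (snd t)) \<in> borel_measurable (VS S \<Otimes>\<^sub>M XS Q)"
        by (rule meas_pairX) (use Rf_meas k in \<open>auto simp: S_def Q_def\<close>)
      show "(\<lambda>t. \<integral>\<^sup>+u. hfun k (snd t) (fst t (Suc k)) u * G u t \<partial>piV) \<in> borel_measurable (VS S \<Otimes>\<^sub>M XS Q)"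
        using Phi_meas[OF k(2) G] unfolding S_def Q_def .
    qed
    from SQ.nn_integral_snd[OF this] show ?thesis by simp
  qed
  finally show ?thesis unfolding S_def Q_def .
qed


lemma MM_sets: "sets MM = sets (VS {1..n+1} \<Otimes>\<^sub>M XS {1..n})"
  unfolding MM_def' by simp

lemma MM_space: "space MM = space (VS {1..n+1} \<Otimes>\<^sub>M XS {1..n})"
  unfolding MM_def' by simp

lemma MM_meas_iff: "f \<in> MM \<rightarrow>\<^sub>M Y \<longleftrightarrow> f \<in> (VS {1..n+1} \<Otimes>\<^sub>M XS {1..n}) \<rightarrow>\<^sub>M Y"
  using measurable_cong_sets[OF MM_sets refl, of Y] by simp

lemma MM_prob: "prob_space MM"
proof (rule prob_spaceI)
  let ?P = "VS {1..n+1}" and ?C = "XS {1..n}"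
  interpret PX: product_sigma_finite "\<lambda>_::nat. count_space (UNIV::'x set)" by (rule psf_X)
  interpret sfC: sigma_finite_measure ?C by (rule sf_XS) simp
  have "emeasure MM (space MM) = (\<integral>\<^sup>+\<omega>. 1 \<partial>MM)" by simp
  also have "\<dots> = (\<integral>\<^sup>+\<omega>. rho \<omega> * 1 \<partial>(?P \<Otimes>\<^sub>M ?C))"
    unfolding MM_def' by (rule nn_integral_density[OF rho_meas]) simp
  also have "\<dots> = (\<integral>\<^sup>+v. (\<integral>\<^sup>+x. rho (v, x) \<partial>?C) \<partial>?P)"
    by (subst sfC.nn_integral_fst[symmetric]) (use rho_meas in auto)
  also have "\<dots> = (\<integral>\<^sup>+v. 1 \<partial>?P)"
  proof (rule nn_integral_cong)
    fix v assume v: "v \<in> space ?P"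
    have vi: "v i \<in> space piV" if "i \<in> {1..n+1}" for i using v that by (auto simp: space_PiM)
    have "(\<integral>\<^sup>+x. rho (v, x) \<partial>?C) = (\<integral>\<^sup>+x. (\<Prod>i\<in>{1..n}. ennreal (K i (x i) (v i) (v (Suc i)))) \<partial>?C)"
    proof (rule nn_integral_cong)
      fix x
      show "rho (v, x) = (\<Prod>i\<in>{1..n}. ennreal (K i (x i) (v i) (v (Suc i))))"
        unfolding rho_def apply simp apply (rule prod_ennreal[symmetric]) using vi by (auto intro!: K_nn)
    qed
    also have "\<dots> = (\<Prod>i\<in>{1..n}. \<integral>\<^sup>+y. ennreal (K i y (v i) (v (Suc i))) \<partial>count_space UNIV)"
      by (rule PX.product_nn_integral_prod) auto
    also have "\<dots> = (\<Prod>i\<in>{1..n}. 1)"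
      by (intro prod.cong refl K_sum1) (auto intro!: vi)
    finally show "(\<integral>\<^sup>+x. rho (v, x) \<partial>?C) = 1" by simp
  qed
  also have "\<dots> = 1" using prob_space.emeasure_space_1[OF VS_prob] by simp
  finally show "emeasure MM (space MM) = 1" .
qed

lemma TT_meas: "TT k \<in> MM \<rightarrow>\<^sub>M NN k"
  unfolding MM_meas_iff TT_def Xobs_def
  by (intro measurable_Pair measurable_compose[OF measurable_fst measurable_restrict_subset]
      measurable_compose[OF measurable_snd measurable_restrict_subset]) (use q1 in auto)

definition gK :: "nat \<Rightarrow> 'v set \<Rightarrow> (nat \<Rightarrow> 'v) \<times> (nat \<Rightarrow> 'x) \<Rightarrow> real" where
  "gK k A t = measure (Kc k (snd t) (fst t (Suc k))) A"

lemma gK_meas: "k < n \<Longrightarrow> A \<in> sets piV \<Longrightarrow> gK k A \<in> borel_measurable (NN k)"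
proof -
  assume k: "k < n" and A: "A \<in> sets piV"
  have "(\<lambda>z. (\<lambda>b x. measure (Kc k x (b (Suc k))) A) (fst z) (snd z)) \<in> borel_measurable (NN k)"
  proof (rule meas_pairX)
    fix x :: "nat \<Rightarrow> 'x"
    have "(\<lambda>b. b (Suc k)) \<in> VS {Suc k..n} \<rightarrow>\<^sub>M piV" using k by simp
    from measurable_compose[OF this Kc_meas[OF A]]
    show "(\<lambda>b. measure (Kc k x (b (Suc k))) A) \<in> borel_measurable (VS {Suc k..n})" .
  qed simp
  then show ?thesis unfolding gK_def[abs_def] by simp
qed

lemma ident:
  assumes k: "1 \<le> k" "k < n" and A: "A \<in> sets piV" and B: "B \<in> sets (NN k)"
  shows "(\<integral>\<^sup>+\<omega>. indicator B (TT k \<omega>) * indicator A (fst \<omega> k) \<partial>MM)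
       = (\<integral>\<^sup>+\<omega>. indicator B (TT k \<omega>) * ennreal (gK k A (TT k \<omega>)) \<partial>MM)"
proof -
  define G1 where "G1 u t = indicator B t * (indicator A u :: ennreal)" for u t
  define G2 where "G2 u t = indicator B t * ennreal (gK k A t)" for u :: 'v and t
  have G1m: "(\<lambda>z. G1 (fst z) (snd z)) \<in> borel_measurable (piV \<Otimes>\<^sub>M NN k)"
    unfolding G1_def using A B by measurable
  have G2m: "(\<lambda>z. G2 (fst z) (snd z)) \<in> borel_measurable (piV \<Otimes>\<^sub>M NN k)"
  proof -
    have "(\<lambda>z. gK k A (snd z)) \<in> borel_measurable (piV \<Otimes>\<^sub>M NN k)"
      using measurable_compose[OF measurable_snd gK_meas[OF k(2) A]] .
    then show ?thesis unfolding G2_def using B by measurable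
  qed
  have "(\<integral>\<^sup>+\<omega>. indicator B (TT k \<omega>) * indicator A (fst \<omega> k) \<partial>MM) = (\<integral>\<^sup>+\<omega>. G1 (fst \<omega> k) (TT k \<omega>) \<partial>MM)"
    unfolding G1_def ..
  also have "\<dots> = (\<integral>\<^sup>+t. Rf k (fst t) (snd t) * (\<integral>\<^sup>+u. hfun k (snd t) (fst t (Suc k)) u * G1 u t \<partial>piV) \<partial>NN k)"
    by (rule core[OF k G1m])
  also have "\<dots> = (\<integral>\<^sup>+t. Rf k (fst t) (snd t) * (\<integral>\<^sup>+u. hfun k (snd t) (fst t (Suc k)) u * G2 u t \<partial>piV) \<partial>NN k)"
  proof (rule nn_integral_cong)
    fix t assume t: "t \<in> space (NN k)"
    define w where "w = fst t (Suc k)"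
    define x where "x = snd t"
    have w: "w \<in> space piV" using t k unfolding w_def by (auto simp: space_pair_measure space_PiM)
    have hm: "hfun k x w \<in> borel_measurable piV" by (rule hfun_meas[OF w])
    have "(\<integral>\<^sup>+u. hfun k x w u * G2 u t \<partial>piV) = (\<integral>\<^sup>+u. hfun k x w u \<partial>piV) * (indicator B t * ennreal (gK k A t))"
      unfolding G2_def by (rule nn_integral_multc[OF hm])
    also have "ennreal (gK k A t) = (\<integral>\<^sup>+v. hfun k x w v * indicator A v \<partial>piV) / Zf k x w"
      unfolding gK_def w_def[symmetric] x_def[symmetric] by (rule Kc_measure[OF w A])
    also have "(\<integral>\<^sup>+u. hfun k x w u \<partial>piV) * (indicator B t * ((\<integral>\<^sup>+v. hfun k x w v * indicator A v \<partial>piV) / Zf k x w))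
        = indicator B t * (\<integral>\<^sup>+v. hfun k x w v * indicator A v \<partial>piV)"
    proof -
      have Z: "Zf k x w \<noteq> 0" "Zf k x w < top" using Zf_pos[OF w] by auto
      have "(\<integral>\<^sup>+u. hfun k x w u \<partial>piV) = Zf k x w" unfolding Zf_def ..
      moreover have "Zf k x w * ((\<integral>\<^sup>+v. hfun k x w v * indicator A v \<partial>piV) / Zf k x w) = (\<integral>\<^sup>+v. hfun k x w v * indicator A v \<partial>piV)"
        using Z by (metis ennreal_times_divide mult.commute ennreal_mult_divide_eq less_top)
      ultimately show ?thesis by (simp add: mult_ac)
    qed
    also have "\<dots> = (\<integral>\<^sup>+u. hfun k x w u * G1 u t \<partial>piV)"
      unfolding G1_def
      by (subst nn_integral_cmult[symmetric]) (use hm A in \<open>auto intro!: nn_integral_cong simp: mult_ac\<close>)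
    finally have "(\<integral>\<^sup>+u. hfun k (snd t) (fst t (Suc k)) u * G1 u t \<partial>piV) = (\<integral>\<^sup>+u. hfun k (snd t) (fst t (Suc k)) u * G2 u t \<partial>piV)"
      unfolding w_def x_def by simp
    then show "Rf k (fst t) (snd t) * (\<integral>\<^sup>+u. hfun k (snd t) (fst t (Suc k)) u * G1 u t \<partial>piV) = Rf k (fst t) (snd t) * (\<integral>\<^sup>+u. hfun k (snd t) (fst t (Suc k)) u * G2 u t \<partial>piV)"
      by simp
  qed
  also have "\<dots> = (\<integral>\<^sup>+\<omega>. G2 (fst \<omega> k) (TT k \<omega>) \<partial>MM)"
    by (rule core[OF k G2m, symmetric])
  finally show ?thesis unfolding G2_def .
qed


lemma charact_gen:
  fixes T :: "(nat \<Rightarrow> 'v) \<times> (nat \<Rightarrow> 'x) \<Rightarrow> 'b" and Y :: "'b measure" and g' :: "'b \<Rightarrow> real"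
  assumes T: "T \<in> MM \<rightarrow>\<^sub>M Y" and g': "g' \<in> borel_measurable Y"
    and gb: "\<And>y. y \<in> space Y \<Longrightarrow> 0 \<le> g' y \<and> g' y \<le> 1"
    and kk: "k \<in> {1..n+1}" and A: "A \<in> sets piV"
    and eq: "\<And>B. B \<in> sets Y \<Longrightarrow> (\<integral>\<^sup>+\<omega>. indicator B (T \<omega>) * indicator A (fst \<omega> k) \<partial>MM)
                                  = (\<integral>\<^sup>+\<omega>. indicator B (T \<omega>) * ennreal (g' (T \<omega>)) \<partial>MM)"
  shows "AE \<omega> in MM. real_cond_exp MM (vimage_algebra (space MM) T Y) (indicator {\<omega> \<in> space MM. fst \<omega> k \<in> A}) \<omega> = g' (T \<omega>)"
proof -
  interpret M: prob_space MM by (rule MM_prob)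
  let ?F = "vimage_algebra (space MM) T Y"
  have Tsp: "T \<in> space MM \<rightarrow> space Y" using measurable_space[OF T] by auto
  have setsF: "sets ?F = {T -` B \<inter> space MM | B. B \<in> sets Y}"
    by (rule sets_vimage_algebra2[OF Tsp])
  have sub: "subalgebra MM ?F"
    unfolding subalgebra_def using setsF measurable_sets[OF T] by auto
  interpret FS: finite_measure_subalgebra MM ?F
    by (intro finite_measure_subalgebra.intro M.finite_measure_axioms finite_measure_subalgebra_axioms.intro sub)
  let ?Ev = "{\<omega> \<in> space MM. fst \<omega> k \<in> A}"
  have fk: "(\<lambda>\<omega>. fst \<omega> k) \<in> MM \<rightarrow>\<^sub>M piV" unfolding MM_meas_iff using kk by simp
  have Ev: "?Ev \<in> sets MM" using measurable_sets[OF fk A] by (simp add: vimage_def Int_def conj_commute)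
  have gT: "(\<lambda>\<omega>. g' (T \<omega>)) \<in> borel_measurable MM" using measurable_compose[OF T g'] .
  have gTb: "\<And>\<omega>. \<omega> \<in> space MM \<Longrightarrow> 0 \<le> g' (T \<omega>) \<and> g' (T \<omega>) \<le> 1" using gb Tsp by auto
  show ?thesis
  proof (rule FS.real_cond_exp_charact)
    fix A' assume "A' \<in> sets ?F"
    then obtain B where B: "B \<in> sets Y" and A': "A' = T -` B \<inter> space MM" using setsF by auto
    have A'm: "A' \<in> sets MM" using A' measurable_sets[OF T B] by simp
    have L: "(\<integral>x\<in>A'. (indicator ?Ev x :: real) \<partial>MM) = enn2real (\<integral>\<^sup>+\<omega>. indicator B (T \<omega>) * indicator A (fst \<omega> k) \<partial>MM)"
    proof -
      have "(\<integral>x\<in>A'. (indicator ?Ev x :: real) \<partial>MM) = (\<integral>x. indicator A' x * (indicator ?Ev x :: real) \<partial>MM)"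
        unfolding set_lebesgue_integral_def by (rule Bochner_Integration.integral_cong) auto
      also have "\<dots> = enn2real (\<integral>\<^sup>+x. ennreal (indicator A' x * (indicator ?Ev x :: real)) \<partial>MM)"
        by (rule integral_eq_nn_integral) (use A'm Ev in auto)
      also have "(\<integral>\<^sup>+x. ennreal (indicator A' x * (indicator ?Ev x :: real)) \<partial>MM) = (\<integral>\<^sup>+\<omega>. indicator B (T \<omega>) * indicator A (fst \<omega> k) \<partial>MM)"
        by (rule nn_integral_cong) (auto simp: A' indicator_def)
      finally show ?thesis .
    qed
    have R: "(\<integral>x\<in>A'. g' (T x) \<partial>MM) = enn2real (\<integral>\<^sup>+\<omega>. indicator B (T \<omega>) * ennreal (g' (T \<omega>)) \<partial>MM)"
    proof -
      have "(\<integral>x\<in>A'. g' (T x) \<partial>MM) = (\<integral>x. indicator A' x * g' (T x) \<partial>MM)"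
        unfolding set_lebesgue_integral_def by (rule Bochner_Integration.integral_cong) auto
      also have "\<dots> = enn2real (\<integral>\<^sup>+x. ennreal (indicator A' x * g' (T x)) \<partial>MM)"
        by (rule integral_eq_nn_integral) (use A'm gT gTb in auto)
      also have "(\<integral>\<^sup>+x. ennreal (indicator A' x * g' (T x)) \<partial>MM) = (\<integral>\<^sup>+\<omega>. indicator B (T \<omega>) * ennreal (g' (T \<omega>)) \<partial>MM)"
        by (rule nn_integral_cong) (auto simp: A' indicator_def)
      finally show ?thesis .
    qed
    show "(\<integral>x\<in>A'. (indicator ?Ev x :: real) \<partial>MM) = (\<integral>x\<in>A'. g' (T x) \<partial>MM)"
      using L R eq[OF B] by simp
  next
    show "integrable MM (indicator ?Ev :: _ \<Rightarrow> real)"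
      by (rule M.integrable_const_bound[where B=1]) (use Ev in auto)
    show "integrable MM (\<lambda>x. g' (T x))"
      by (rule M.integrable_const_bound[where B=1]) (use gT gTb in auto)
    have "T \<in> ?F \<rightarrow>\<^sub>M Y" by (rule measurable_vimage_algebra1[OF Tsp])
    from measurable_compose[OF this g'] show "(\<lambda>x. g' (T x)) \<in> borel_measurable ?F" .
  qed
qed

lemma gK_bounds: "t \<in> space (NN k) \<Longrightarrow> 0 \<le> gK k A t \<and> gK k A t \<le> 1"
proof -
  interpret KP: prob_space "Kc k (snd t) (fst t (Suc k))" by (rule Kc_prob)
  show ?thesis unfolding gK_def by simp
qed

lemma condexp:
  assumes k: "1 \<le> k" "k < n" and A: "A \<in> sets piV"
  shows "AE \<omega> in MM.
         condP_V MM (sig_Vtail_X n piV MM k q) k A \<omega> = measure (Kc k (Xobs q n \<omega>) (fst \<omega> (Suc k))) A \<and>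
         condP_V MM (sig_V1_X n piV MM k q) k A \<omega> = measure (Kc k (Xobs q n \<omega>) (fst \<omega> (Suc k))) A"
proof -
  have gKT: "gK k A (TT k \<omega>) = measure (Kc k (Xobs q n \<omega>) (fst \<omega> (Suc k))) A" for \<omega>
    unfolding gK_def TT_def using k by simp
  have kk: "k \<in> {1..n+1}" using k by simp
  have AE1: "AE \<omega> in MM. condP_V MM (sig_Vtail_X n piV MM k q) k A \<omega> = gK k A (TT k \<omega>)"
  proof -
    have "sig_Vtail_X n piV MM k q = vimage_algebra (space MM) (TT k) (NN k)"
      unfolding sig_Vtail_X_def TT_def[abs_def] ..
    moreover have "AE \<omega> in MM. real_cond_exp MM (vimage_algebra (space MM) (TT k) (NN k)) (indicator {\<omega> \<in> space MM. fst \<omega> k \<in> A}) \<omega> = gK k A (TT k \<omega>)"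
      by (rule charact_gen[OF TT_meas gK_meas[OF k(2) A] gK_bounds kk A ident[OF k A]])
    ultimately show ?thesis unfolding condP_V_def by simp
  qed
  define T2 where "T2 \<omega> = (fst \<omega> (Suc k), Xobs q n \<omega>)" for \<omega> :: "(nat \<Rightarrow> 'v) \<times> (nat \<Rightarrow> 'x)"
  define Y2 where "Y2 = piV \<Otimes>\<^sub>M XS {q..n}"
  define pr where "pr t = (fst t (Suc k), snd t)" for t :: "(nat \<Rightarrow> 'v) \<times> (nat \<Rightarrow> 'x)"
  have pr: "pr \<in> NN k \<rightarrow>\<^sub>M Y2" unfolding pr_def Y2_def using k by simp
  have T2e: "T2 \<omega> = pr (TT k \<omega>)" for \<omega> unfolding T2_def pr_def TT_def using k by simp
  define g2 where "g2 y = measure (Kc k (snd y) (fst y)) A" for y :: "'v \<times> (nat \<Rightarrow> 'x)"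
  have g2T: "g2 (T2 \<omega>) = measure (Kc k (Xobs q n \<omega>) (fst \<omega> (Suc k))) A" for \<omega>
    unfolding g2_def T2_def by simp
  have g2m: "g2 \<in> borel_measurable Y2"
  proof -
    have "(\<lambda>z. (\<lambda>w x. measure (Kc k x w) A) (fst z) (snd z)) \<in> borel_measurable (piV \<Otimes>\<^sub>M XS {q..n})"
      by (rule meas_pairX) (use Kc_meas[OF A] in auto)
    then show ?thesis unfolding g2_def[abs_def] Y2_def by simp
  qed
  have g2b: "0 \<le> g2 y \<and> g2 y \<le> 1" for y
  proof -
    interpret KP: prob_space "Kc k (snd y) (fst y)" by (rule Kc_prob)
    show ?thesis unfolding g2_def by simp
  qed
  have T2m: "T2 \<in> MM \<rightarrow>\<^sub>M Y2" unfolding T2e[abs_def] using measurable_compose[OF TT_meas pr] by simp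
  have AE2: "AE \<omega> in MM. condP_V MM (sig_V1_X n piV MM k q) k A \<omega> = g2 (T2 \<omega>)"
  proof -
    have "sig_V1_X n piV MM k q = vimage_algebra (space MM) T2 Y2"
      unfolding sig_V1_X_def T2_def[abs_def] Y2_def ..
    moreover have "AE \<omega> in MM. real_cond_exp MM (vimage_algebra (space MM) T2 Y2) (indicator {\<omega> \<in> space MM. fst \<omega> k \<in> A}) \<omega> = g2 (T2 \<omega>)"
    proof (rule charact_gen[OF T2m g2m g2b kk A])
      fix B assume B: "B \<in> sets Y2"
      define B'' where "B'' = pr -` B \<inter> space (NN k)"
      have B'': "B'' \<in> sets (NN k)" unfolding B''_def using measurable_sets[OF pr B] .
      have TTsp: "TT k \<omega> \<in> space (NN k)" if "\<omega> \<in> space MM" for \<omega> using measurable_space[OF TT_meas that] .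
      have "(\<integral>\<^sup>+\<omega>. indicator B (T2 \<omega>) * indicator A (fst \<omega> k) \<partial>MM) = (\<integral>\<^sup>+\<omega>. indicator B'' (TT k \<omega>) * indicator A (fst \<omega> k) \<partial>MM)"
        by (rule nn_integral_cong) (auto simp: B''_def T2e indicator_def TTsp)
      also have "\<dots> = (\<integral>\<^sup>+\<omega>. indicator B'' (TT k \<omega>) * ennreal (gK k A (TT k \<omega>)) \<partial>MM)"
        by (rule ident[OF k A B''])
      also have "\<dots> = (\<integral>\<^sup>+\<omega>. indicator B (T2 \<omega>) * ennreal (g2 (T2 \<omega>)) \<partial>MM)"
        by (rule nn_integral_cong) (auto simp: B''_def T2e[symmetric] indicator_def TTsp gKT g2T)
      finally show "(\<integral>\<^sup>+\<omega>. indicator B (T2 \<omega>) * indicator A (fst \<omega> k) \<partial>MM) = (\<integral>\<^sup>+\<omega>. indicator B (T2 \<omega>) * ennreal (g2 (T2 \<omega>)) \<partial>MM)" .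
    qed
    ultimately show ?thesis unfolding condP_V_def by simp
  qed
  from AE1 AE2 show ?thesis
    by eventually_elim (simp add: gKT g2T)
qed


lemma beta_one: "k \<le> q \<Longrightarrow> beta k x v = 1"
  by (induction k) auto

definition Zb :: "nat \<Rightarrow> (nat \<Rightarrow> 'x) \<Rightarrow> ennreal" where
  "Zb k x = (\<integral>\<^sup>+v. beta k x v \<partial>piV)"

definition mu :: "nat \<Rightarrow> (nat \<Rightarrow> 'x) \<Rightarrow> 'v measure" where
  "mu k x = density piV (\<lambda>v. beta k x v / Zb k x)"

lemma Zb_pos: "Zb k x \<noteq> 0 \<and> Zb k x < top"
proof -
  have "(\<integral>\<^sup>+v. ennreal (cb k) \<partial>piV) \<le> Zb k x" unfolding Zb_def
    by (rule nn_integral_mono) (use beta_bounds in auto)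
  moreover have "Zb k x \<le> (\<integral>\<^sup>+v. 1 \<partial>piV)" unfolding Zb_def
    by (rule nn_integral_mono) (use beta_bounds in auto)
  moreover have "0 < ennreal (cb k)" using cb_pos by simp
  ultimately show ?thesis by (auto simp: P.emeasure_space_1 top_unique intro: order.strict_trans1)
qed

lemma mu_emeasure: "A \<in> sets piV \<Longrightarrow> emeasure (mu k x) A = (\<integral>\<^sup>+v. beta k x v * indicator A v \<partial>piV) / Zb k x"
proof -
  assume A: "A \<in> sets piV"
  have "emeasure (mu k x) A = (\<integral>\<^sup>+v. beta k x v / Zb k x * indicator A v \<partial>piV)"
    unfolding mu_def using A beta_meas by (simp add: emeasure_density)
  also have "\<dots> = (\<integral>\<^sup>+v. beta k x v * indicator A v / Zb k x \<partial>piV)"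
    by (rule nn_integral_cong) (simp add: divide_ennreal_def mult_ac)
  also have "\<dots> = (\<integral>\<^sup>+v. beta k x v * indicator A v \<partial>piV) / Zb k x"
    by (rule nn_integral_divide) (use A beta_meas in simp)
  finally show ?thesis .
qed

lemma mu_prob: "prob_space (mu k x) \<and> sets (mu k x) = sets piV"
proof
  have sp: "space (mu k x) = space piV" unfolding mu_def by simp
  have "emeasure (mu k x) (space piV) = (\<integral>\<^sup>+v. beta k x v * indicator (space piV) v \<partial>piV) / Zb k x"
    by (rule mu_emeasure) simp
  also have "(\<integral>\<^sup>+v. beta k x v * indicator (space piV) v \<partial>piV) = Zb k x"
    unfolding Zb_def by (rule nn_integral_cong) simp
  finally have "emeasure (mu k x) (space (mu k x)) = 1" using sp Zb_pos[of k x] by simp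
  then show "prob_space (mu k x)" by (rule prob_spaceI)
  show "sets (mu k x) = sets piV" unfolding mu_def by simp
qed

lemma lower:
  assumes k: "q \<le> k" and A: "A \<in> sets piV" and w: "w \<in> space piV"
  shows "\<nu> k * measure (mu k x) A \<le> measure (Kc k x w) A"
proof -
  interpret MU: prob_space "mu k x" using mu_prob by auto
  have k1: "1 \<le> k" using k q1 by simp
  have nu0: "0 \<le> \<nu> k" using H2_pos k1 by (auto intro: less_imp_le)
  define a where "a = (\<integral>\<^sup>+v. beta k x v * indicator A v \<partial>piV)"
  define b where "b = (\<integral>\<^sup>+v. hfun k x w v * indicator A v \<partial>piV)"
  have Z: "Zf k x w \<noteq> 0" "Zf k x w < top" using Zf_pos[OF w] by auto
  have ZZ: "Zf k x w \<le> Zb k x" unfolding Zf_def Zb_def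
  proof (rule nn_integral_mono)
    fix v assume v: "v \<in> space piV"
    have "K k (x k) v w \<le> 1" using H2 k1 v w by auto
    then show "hfun k x w v \<le> beta k x v" unfolding hfun_def using k
      using mult_right_mono[of "ennreal (K k (x k) v w)" 1 "beta k x v"] by simp
  qed
  have ab: "ennreal (\<nu> k) * a \<le> b" unfolding a_def b_def
  proof (subst nn_integral_cmult[symmetric])
    show "(\<lambda>v. beta k x v * indicator A v) \<in> borel_measurable piV" using beta_meas A by simp
    show "(\<integral>\<^sup>+v. ennreal (\<nu> k) * (beta k x v * indicator A v) \<partial>piV) \<le> (\<integral>\<^sup>+v. hfun k x w v * indicator A v \<partial>piV)"
    proof (rule nn_integral_mono)
      fix v assume v: "v \<in> space piV"
      have "\<nu> k \<le> K k (x k) v w" using H2 k1 v w by auto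
      then have "ennreal (\<nu> k) \<le> ennreal (K k (x k) v w)" by (rule ennreal_leI)
      then have "ennreal (\<nu> k) * beta k x v \<le> ennreal (K k (x k) v w) * beta k x v" by (rule mult_right_mono) simp
      then have "ennreal (\<nu> k) * beta k x v \<le> hfun k x w v" unfolding hfun_def using k by simp
      then show "ennreal (\<nu> k) * (beta k x v * indicator A v) \<le> hfun k x w v * indicator A v"
        by (auto simp: indicator_def mult_ac)
    qed
  qed
  have "ennreal (\<nu> k * measure (mu k x) A) = ennreal (\<nu> k) * (a / Zb k x)"
    using nu0 A by (simp add: ennreal_mult MU.emeasure_eq_measure[symmetric] mu_emeasure a_def)
  also have "\<dots> = ennreal (\<nu> k) * a / Zb k x" by (simp add: ennreal_times_divide)
  also have "\<dots> \<le> b / Zf k x w"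
  proof (rule divide_le_posI_ennreal)
    show "0 < Zb k x" using Zb_pos[of k x] by (simp add: zero_less_iff_neq_zero)
    have "Zf k x w * (b / Zf k x w) = b"
      using Z by (metis ennreal_times_divide mult.commute ennreal_mult_divide_eq less_top)
    moreover have "Zf k x w * (b / Zf k x w) \<le> Zb k x * (b / Zf k x w)"
      using ZZ by (rule mult_right_mono) simp
    ultimately show "ennreal (\<nu> k) * a \<le> Zb k x * (b / Zf k x w)" using ab by simp
  qed
  also have "\<dots> = ennreal (measure (Kc k x w) A)" unfolding b_def by (rule Kc_measure[OF w A, symmetric])
  finally show ?thesis by (simp add: ennreal_le_iff)
qed

lemma below_q:
  assumes k: "k < q" and A: "A \<in> sets piV" and w: "w \<in> space piV"
  shows "measure (Kc k x w) A = measure piV A"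
proof -
  have h1: "hfun k x w v = 1" for v unfolding hfun_def using k beta_one[of k x v] by simp
  have Z1: "Zf k x w = 1" unfolding Zf_def h1 by (simp add: P.emeasure_space_1)
  have i1: "(\<integral>\<^sup>+v. hfun k x w v * indicator A v \<partial>piV) = emeasure piV A"
    using A by (simp add: h1 nn_integral_indicator)
  have "ennreal (measure (Kc k x w) A) = (\<integral>\<^sup>+v. hfun k x w v * indicator A v \<partial>piV) / Zf k x w"
    by (rule Kc_measure[OF w A])
  also have "\<dots> = emeasure piV A" using i1 Z1 by (simp add: divide_ennreal_def)
  also have "\<dots> = ennreal (measure piV A)" by (simp add: P.emeasure_eq_measure)
  finally show ?thesis by simp
qed

end

theorem lemma4:
  fixes n q :: nat and piV :: "'v measure"
    and K :: "nat \<Rightarrow> 'x::countable \<Rightarrow> 'v \<Rightarrow> 'v \<Rightarrow> real" and \<nu> :: "nat \<Rightarrow> real"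
  assumes n: "1 \<le> n"
    and piV: "prob_space piV"
    and K_meas: "\<forall>i\<ge>1. \<forall>x. (\<lambda>(v, w). K i x v w) \<in> borel_measurable (piV \<Otimes>\<^sub>M piV)"
    and K_distr: "\<forall>i\<ge>1. \<forall>v\<in>space piV. \<forall>w\<in>space piV. ((\<lambda>x. K i x v w) has_sum 1) UNIV"
    and H2_pos: "\<forall>i\<ge>1. 0 < \<nu> i"
    and H2: "\<forall>i\<ge>1. \<forall>x. \<forall>v\<in>space piV. \<forall>w\<in>space piV. \<nu> i \<le> K i x v w \<and> K i x v w \<le> 1"
    and q: "1 \<le> q" "q \<le> n"
  shows "\<exists>Kc :: nat \<Rightarrow> (nat \<Rightarrow> 'x) \<Rightarrow> 'v \<Rightarrow> 'v measure.
     (\<forall>k x w. prob_space (Kc k x w) \<and> sets (Kc k x w) = sets piV) \<and>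
     (\<forall>k x A. A \<in> sets piV \<longrightarrow> (\<lambda>w. measure (Kc k x w) A) \<in> borel_measurable piV) \<and>
     (\<forall>k\<in>{1..<n}. \<forall>A\<in>sets piV. AE \<omega> in joint_law n piV K.
         condP_V (joint_law n piV K) (sig_Vtail_X n piV (joint_law n piV K) k q) k A \<omega>
           = measure (Kc k (Xobs q n \<omega>) (fst \<omega> (Suc k))) A \<and>
         condP_V (joint_law n piV K) (sig_V1_X n piV (joint_law n piV K) k q) k A \<omega>
           = measure (Kc k (Xobs q n \<omega>) (fst \<omega> (Suc k))) A) \<and>
     (\<forall>k\<in>{q..<n}. \<exists>\<mu> :: (nat \<Rightarrow> 'x) \<Rightarrow> 'v measure.
         (\<forall>x. prob_space (\<mu> x) \<and> sets (\<mu> x) = sets piV) \<and>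
         (\<forall>A\<in>sets piV. AE \<omega> in joint_law n piV K.
            measure (Kc k (Xobs q n \<omega>) (fst \<omega> (Suc k))) A \<ge> \<nu> k * measure (\<mu> (Xobs q n \<omega>)) A)) \<and>
     (\<forall>k\<in>{1..<q}. \<forall>A\<in>sets piV. AE \<omega> in joint_law n piV K.
         measure (Kc k (Xobs q n \<omega>) (fst \<omega> (Suc k))) A = measure piV A)"
proof -
  interpret L: L4 n q piV K \<nu>
    by (rule L4.intro) (use assms in auto)
  have spk: "fst \<omega> (Suc k) \<in> space piV" if "\<omega> \<in> space (joint_law n piV K)" "k < n" for \<omega> k
    using that by (auto simp: L.MM_space space_pair_measure space_PiM)
  show ?thesis
  proof (intro exI[of _ L.Kc] conjI allI ballI impI)
    fix k x w show "prob_space (L.Kc k x w)" by (rule L.Kc_prob)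
    show "sets (L.Kc k x w) = sets piV" by (rule L.Kc_sets)
  next
    fix k x A assume "A \<in> sets piV"
    then show "(\<lambda>w. measure (L.Kc k x w) A) \<in> borel_measurable piV" by (rule L.Kc_meas)
  next
    fix k A assume k: "k \<in> {1..<n}" and A: "A \<in> sets piV"
    show "AE \<omega> in joint_law n piV K.
         condP_V (joint_law n piV K) (sig_Vtail_X n piV (joint_law n piV K) k q) k A \<omega>
           = measure (L.Kc k (Xobs q n \<omega>) (fst \<omega> (Suc k))) A \<and>
         condP_V (joint_law n piV K) (sig_V1_X n piV (joint_law n piV K) k q) k A \<omega>
           = measure (L.Kc k (Xobs q n \<omega>) (fst \<omega> (Suc k))) A"
      using k A by (intro L.condexp) auto
  next
    fix k assume k: "k \<in> {q..<n}"
    show "\<exists>\<mu> :: (nat \<Rightarrow> 'x) \<Rightarrow> 'v measure.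
         (\<forall>x. prob_space (\<mu> x) \<and> sets (\<mu> x) = sets piV) \<and>
         (\<forall>A\<in>sets piV. AE \<omega> in joint_law n piV K.
            measure (L.Kc k (Xobs q n \<omega>) (fst \<omega> (Suc k))) A \<ge> \<nu> k * measure (\<mu> (Xobs q n \<omega>)) A)"
    proof (intro exI[of _ "L.mu k"] conjI allI ballI)
      fix x show "prob_space (L.mu k x)" using L.mu_prob by auto
    next
      fix x show "sets (L.mu k x) = sets piV" using L.mu_prob by auto
    next
      fix A assume A: "A \<in> sets piV"
      show "AE \<omega> in joint_law n piV K.
            measure (L.Kc k (Xobs q n \<omega>) (fst \<omega> (Suc k))) A \<ge> \<nu> k * measure (L.mu k (Xobs q n \<omega>)) A"
        by (rule AE_I2) (use k A spk in \<open>auto intro!: L.lower\<close>)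
    qed
  next
    fix k A assume k: "k \<in> {1..<q}" and A: "A \<in> sets piV"
    show "AE \<omega> in joint_law n piV K. measure (L.Kc k (Xobs q n \<omega>) (fst \<omega> (Suc k))) A = measure piV A"
      by (rule AE_I2) (use k A spk q in \<open>auto intro!: L.below_q\<close>)
  qed
qed

end
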